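(* Let $n\ge2$, $1<\mathscr{P}\le n-1$, $N=\binom{n}{\mathscr{P}}$, let $0\le l<k\le N$ be integers and $p,q$ constants with $p>q-l$. Let $\varphi\in C^0(\mathbb{S}^n)$ be positive. Then the equation $$\frac{\sigma_k(\Lambda(\nabla^2u+uI))}{\sigma_l(\Lambda(\nabla^2u+uI))}=u^{p-1}(u^2+|\nabla u|^2)^{\frac{k+1-q}{2}}\varphi\quad\text{on }\mathbb{S}^n$$ has at most one positive admissible solution.
   Context: $\mathbb{S}^n$ is the unit sphere with its standard metric; $\nabla u$, $\nabla^2u$ are the gradient and covariant Hessian in a local orthonormal frame; $I$ is the identity. Let $\mathbf{I}_1,\dots,\mathbf{I}_N$ enumerate the multi-indices $1\le i_1<\dots<i_{\mathscr{P}}\le n$. For a symmetric matrix $A$ with eigenvalues $\lambda$, $\Lambda(A)=(\Lambda_{\mathbf{I}_1},\dots,\Lambda_{\mathbf{I}_N})$ with $\Lambda_{\mathbf{I}}=\lambda_{i_1}+\dots+\lambda_{i_{\mathscr{P}}}$. $\sigma_m$ is the $m$-th elementary symmetric polynomial, $\sigma_0=1$; $\Gamma_k=\{\mu\in\mathbb{R}^N:\sigma_j(\mu)>0,\ 1\le j\le k\}$. A function $u\in C^2(\mathbb{S}^n)$ is admissible if $\Lambda(\nabla^2u+uI)\in\Gamma_k$ at every point. *)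

theory Defs
  imports "HOL-Analysis.Analysis"
begin

text \<open>The unit sphere S^n is realised as sphere 0 1 in R^(n+1) = real^'m, with n = CARD('m) - 1.\<close>

definition sph_ext :: "(real^'m::finite \<Rightarrow> real) \<Rightarrow> real^'m \<Rightarrow> real" where
  "sph_ext u y = u (y /\<^sub>R norm y)"

definition ext_grad :: "(real^'m::finite \<Rightarrow> real) \<Rightarrow> real^'m \<Rightarrow> real^'m" where
  "ext_grad u y = (\<chi> i. frechet_derivative (sph_ext u) (at y) (axis i 1))"

definition ext_hess :: "(real^'m::finite \<Rightarrow> real) \<Rightarrow> real^'m \<Rightarrow> real^'m^'m" where
  "ext_hess u y = (\<chi> i j. frechet_derivative (ext_grad u) (at y) (axis j 1) $ i)"

text \<open>u is C^2 on the sphere iff its homogeneous extension is C^2 on R^(n+1) minus 0.\<close>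
definition C2_sphere :: "(real^'m::finite \<Rightarrow> real) \<Rightarrow> bool" where
  "C2_sphere u \<longleftrightarrow>
     (\<forall>y. y \<noteq> 0 \<longrightarrow> sph_ext u differentiable (at y) \<and> ext_grad u differentiable (at y))
     \<and> continuous_on (- {0}) (ext_hess u)"

text \<open>Spherical gradient (the gradient of the 0-homogeneous extension is tangent).\<close>
definition sph_grad :: "(real^'m::finite \<Rightarrow> real) \<Rightarrow> real^'m \<Rightarrow> real^'m" where
  "sph_grad u x = ext_grad u x"

definition sph_hess :: "(real^'m::finite \<Rightarrow> real) \<Rightarrow> real^'m \<Rightarrow> real^'m \<Rightarrow> real^'m \<Rightarrow> real" where
  "sph_hess u x v w = v \<bullet> (ext_hess u x *v w) - (ext_grad u x \<bullet> x) * (v \<bullet> w)"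

definition sph_A :: "(real^'m::finite \<Rightarrow> real) \<Rightarrow> real^'m \<Rightarrow> real^'m \<Rightarrow> real^'m \<Rightarrow> real" where
  "sph_A u x v w = sph_hess u x v w + u x * (v \<bullet> w)"

definition tangent_frame :: "real^'m::finite \<Rightarrow> (nat \<Rightarrow> real^'m) \<Rightarrow> bool" where
  "tangent_frame x e \<longleftrightarrow>
     (\<forall>i\<in>{1..CARD('m) - 1}. e i \<bullet> x = 0) \<and>
     (\<forall>i\<in>{1..CARD('m) - 1}. \<forall>j\<in>{1..CARD('m) - 1}. e i \<bullet> e j = (if i = j then 1 else 0))"

definition sph_eigs :: "(real^'m::finite \<Rightarrow> real) \<Rightarrow> real^'m \<Rightarrow> nat \<Rightarrow> real" where
  "sph_eigs u x = (SOME lam. \<exists>e. tangent_frame x e \<and>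
      (\<forall>i\<in>{1..CARD('m) - 1}. \<forall>j\<in>{1..CARD('m) - 1}.
          sph_A u x (e i) (e j) = (if i = j then lam i else 0)))"

text \<open>Multi-indices 1 <= i_1 < ... < i_P <= n, as P-element subsets of {1..n}.\<close>
definition multi_indices :: "nat \<Rightarrow> nat \<Rightarrow> nat set set" where
  "multi_indices n P = {I. I \<subseteq> {1..n} \<and> card I = P}"

definition Lam :: "(nat \<Rightarrow> real) \<Rightarrow> nat set \<Rightarrow> real" where
  "Lam lam I = (\<Sum>i\<in>I. lam i)"

definition esym :: "nat \<Rightarrow> ('i \<Rightarrow> real) \<Rightarrow> 'i set \<Rightarrow> real" where
  "esym m f A = (\<Sum>S\<in>{S. S \<subseteq> A \<and> card S = m}. \<Prod>i\<in>S. f i)"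

definition in_Gamma :: "nat \<Rightarrow> ('i \<Rightarrow> real) \<Rightarrow> 'i set \<Rightarrow> bool" where
  "in_Gamma k f A \<longleftrightarrow> (\<forall>j\<in>{1..k}. esym j f A > 0)"

definition admissible :: "nat \<Rightarrow> nat \<Rightarrow> (real^'m::finite \<Rightarrow> real) \<Rightarrow> bool" where
  "admissible P k u \<longleftrightarrow> C2_sphere u \<and>
     (\<forall>x\<in>sphere 0 1. in_Gamma k (Lam (sph_eigs u x)) (multi_indices (CARD('m) - 1) P))"

definition solves_eq :: "nat \<Rightarrow> nat \<Rightarrow> nat \<Rightarrow> real \<Rightarrow> real \<Rightarrow> (real^'m::finite \<Rightarrow> real)
                         \<Rightarrow> (real^'m \<Rightarrow> real) \<Rightarrow> bool" where
  "solves_eq P k l p q phi u \<longleftrightarrow>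
     (\<forall>x\<in>sphere 0 1.
        esym k (Lam (sph_eigs u x)) (multi_indices (CARD('m) - 1) P)
        / esym l (Lam (sph_eigs u x)) (multi_indices (CARD('m) - 1) P)
        = u x powr (p - 1) * ((u x)\<^sup>2 + (norm (sph_grad u x))\<^sup>2) powr ((real k + 1 - q) / 2) * phi x)"

end

theory Submission
  imports Defs "HOL-Computational_Algebra.Polynomial"
begin
lemma esym_0[simp]: "finite A \<Longrightarrow> esym 0 f A = 1"
proof -
  assume "finite A"
  then have "{S. S \<subseteq> A \<and> card S = 0} = {{}}"
    by (auto dest: finite_subset)
  then show ?thesis by (simp add: esym_def)
qed

lemma esym_big: "finite A \<Longrightarrow> card A < m \<Longrightarrow> esym m f A = 0"
proof -
  assume "finite A" "card A < m"
  have "card S \<noteq> m" if "S \<subseteq> A" for S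
  proof -
    have "card S \<le> card A" by (rule card_mono[OF \<open>finite A\<close> that])
    then show ?thesis using \<open>card A < m\<close> by simp
  qed
  then have e: "{S. S \<subseteq> A \<and> card S = m} = {}" by blast
  show ?thesis unfolding esym_def e by simp
qed

lemma esym_insert:
  assumes "finite A" "a \<notin> A"
  shows "esym (Suc m) f (insert a A) = esym (Suc m) f A + f a * esym m f A"
proof -
  let ?X = "{S. S \<subseteq> A \<and> card S = Suc m}"
  let ?Y = "{S. S \<subseteq> A \<and> card S = m}"
  have fin: "finite (Pow A)" using assms by simp
  have eq: "{S. S \<subseteq> insert a A \<and> card S = Suc m} = ?X \<union> insert a ` ?Y"
  proof (rule set_eqI, rule iffI)
    fix S assume S: "S \<in> {S. S \<subseteq> insert a A \<and> card S = Suc m}"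
    show "S \<in> ?X \<union> insert a ` ?Y"
    proof (cases "a \<in> S")
      case True
      have "S - {a} \<in> ?Y" using S True assms
        by (auto simp: card_Diff_singleton dest: finite_subset)
      moreover have "S = insert a (S - {a})" using True by auto
      ultimately show ?thesis by blast
    next
      case False
      then show ?thesis using S by auto
    qed
  next
    fix S assume "S \<in> ?X \<union> insert a ` ?Y"
    then show "S \<in> {S. S \<subseteq> insert a A \<and> card S = Suc m}"
    proof
      assume "S \<in> insert a ` ?Y"
      then obtain T where T: "T \<subseteq> A" "card T = m" "S = insert a T" by auto
      have "finite T" using T(1) assms(1) finite_subset by blast
      moreover have "a \<notin> T" using T(1) assms(2) by blast
      ultimately show ?thesis using T by auto
    qed auto
  qed
  have disj: "?X \<inter> insert a ` ?Y = {}" using assms by auto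
  have finX: "finite ?X" by (rule finite_subset[OF _ fin]) auto
  have finY: "finite ?Y" by (rule finite_subset[OF _ fin]) auto
  have inj: "inj_on (insert a) ?Y"
  proof (rule inj_onI)
    fix S T assume "S \<in> ?Y" "T \<in> ?Y" and st: "insert a S = insert a T"
    then have "a \<notin> S" "a \<notin> T" using assms by auto
    then show "S = T" using st by (simp add: insert_ident)
  qed
  have "esym (Suc m) f (insert a A) = (\<Sum>S\<in>?X. prod f S) + (\<Sum>S\<in>insert a ` ?Y. prod f S)"
    unfolding esym_def eq by (rule sum.union_disjoint) (use finX finY disj in auto)
  also have "(\<Sum>S\<in>insert a ` ?Y. prod f S) = (\<Sum>S\<in>?Y. prod f (insert a S))"
    by (rule sum.reindex[OF inj, unfolded comp_def])
  also have "\<dots> = (\<Sum>S\<in>?Y. f a * prod f S)"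
  proof (rule sum.cong[OF refl])
    fix S assume "S \<in> ?Y"
    then have "finite S" "a \<notin> S" using assms finite_subset by auto
    then show "prod f (insert a S) = f a * prod f S" by simp
  qed
  also have "\<dots> = f a * esym m f A" by (simp add: esym_def sum_distrib_left)
  finally show ?thesis by (simp add: esym_def)
qed

lemma esym_remove:
  assumes "finite A" "a \<in> A"
  shows "esym (Suc m) f A = esym (Suc m) f (A - {a}) + f a * esym m f (A - {a})"
  using esym_insert[of "A - {a}" a m f] assms by (simp add: insert_absorb)

lemma esym_cong: "(\<And>i. i \<in> A \<Longrightarrow> f i = g i) \<Longrightarrow> esym m f A = esym m g A"
  unfolding esym_def by (intro sum.cong refl prod.cong) auto

lemma esym_reindex:
  assumes "bij_betw h B A"
  shows "esym m f A = esym m (f \<circ> h) B"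
proof -
  have inj: "inj_on h B" by (rule bij_betw_imp_inj_on[OF assms])
  have img: "h ` B = A" by (rule bij_betw_imp_surj_on[OF assms])
  have inj2: "inj_on ((`) h) {S. S \<subseteq> B \<and> card S = m}"
  proof (rule inj_onI)
    fix S T assume "S \<in> {S. S \<subseteq> B \<and> card S = m}" "T \<in> {S. S \<subseteq> B \<and> card S = m}"
      and st: "h ` S = h ` T"
    then have "S \<subseteq> B" "T \<subseteq> B" by auto
    then show "S = T" using inj_on_image_eq_iff[OF inj, of S T] st by simp
  qed
  have im2: "(`) h ` {S. S \<subseteq> B \<and> card S = m} = {S. S \<subseteq> A \<and> card S = m}"
  proof (rule set_eqI, rule iffI)
    fix S assume "S \<in> (`) h ` {S. S \<subseteq> B \<and> card S = m}"
    then obtain T where T: "T \<subseteq> B" "card T = m" "S = h ` T" by auto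
    have "card (h ` T) = card T" by (rule card_image[OF inj_on_subset[OF inj T(1)]])
    moreover have "h ` T \<subseteq> A" using T(1) img by auto
    ultimately show "S \<in> {S. S \<subseteq> A \<and> card S = m}" using T by simp
  next
    fix S assume S: "S \<in> {S. S \<subseteq> A \<and> card S = m}"
    define T where "T = B \<inter> h -` S"
    have hT: "h ` T = S" using S img unfolding T_def by auto
    have TB: "T \<subseteq> B" unfolding T_def by auto
    have "card (h ` T) = card T" by (rule card_image[OF inj_on_subset[OF inj TB]])
    then have "card T = m" using hT S by simp
    then show "S \<in> (`) h ` {S. S \<subseteq> B \<and> card S = m}" using hT TB by blast
  qed
  have "esym m f A = (\<Sum>S\<in>(`) h ` {S. S \<subseteq> B \<and> card S = m}. prod f S)"
    unfolding esym_def im2 ..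
  also have "\<dots> = (\<Sum>S\<in>{S. S \<subseteq> B \<and> card S = m}. prod f (h ` S))"
    by (rule sum.reindex[OF inj2, unfolded comp_def])
  also have "\<dots> = (\<Sum>S\<in>{S. S \<subseteq> B \<and> card S = m}. prod (f \<circ> h) S)"
  proof (rule sum.cong[OF refl])
    fix S assume "S \<in> {S. S \<subseteq> B \<and> card S = m}"
    then have "inj_on h S" using inj_on_subset[OF inj] by blast
    then show "prod f (h ` S) = prod (f \<circ> h) S" by (rule prod.reindex)
  qed
  finally show ?thesis by (simp add: esym_def)
qed

lemma esym_scale: "esym m (\<lambda>i. c * f i) A = c ^ m * esym m f A"
  unfolding esym_def sum_distrib_left
proof (rule sum.cong[OF refl])
  fix S assume "S \<in> {S. S \<subseteq> A \<and> card S = m}"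
  then have "card S = m" by simp
  then show "(\<Prod>i\<in>S. c * f i) = c ^ m * prod f S" by (simp add: prod.distrib)
qed

lemma esym_1: "finite A \<Longrightarrow> esym 1 f A = sum f A"
proof (induction A rule: finite_induct)
  case empty
  then show ?case by (simp add: esym_big)
next
  case (insert a A)
  then show ?case using esym_insert[of A a 0 f] by simp
qed

lemma esym_2: "finite A \<Longrightarrow> 2 * esym 2 f A = (sum f A)^2 - (\<Sum>i\<in>A. (f i)^2)"
proof (induction A rule: finite_induct)
  case empty
  then show ?case by (simp add: esym_big)
next
  case (insert a A)
  have e: "esym 2 f (insert a A) = esym 2 f A + f a * sum f A"
    using esym_insert[of A a 1 f] esym_1[of A f] insert(1,2) by (simp add: numeral_2_eq_2)
  show ?case unfolding e using insert(1,2,3)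
    by (simp add: power2_eq_square distrib_left distrib_right)
qed

definition charp :: "(nat \<Rightarrow> real) \<Rightarrow> nat \<Rightarrow> real poly" where
  "charp f N = (\<Prod>i<N. [:f i, 1:])"

lemma charp_Suc: "charp f (Suc N) = charp f N * [:f N, 1:]"
  by (simp add: charp_def)

lemma degree_charp: "degree (charp f N) = N"
proof -
  have "degree (charp f N) = (\<Sum>i<N. degree [:f i, 1:])"
    unfolding charp_def by (rule degree_prod_eq_sum_degree) auto
  then show ?thesis by simp
qed

lemma poly_charp: "poly (charp f N) t = (\<Prod>i<N. t + f i)"
  by (simp add: charp_def poly_prod add.commute)

lemma coeff_charp: "m \<le> N \<Longrightarrow> coeff (charp f N) m = esym (N - m) f {..<N}"
proof (induction N arbitrary: m)
  case 0
  then show ?case by (simp add: charp_def)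
next
  case (Suc N)
  have split: "charp f (Suc N) = smult (f N) (charp f N) + pCons 0 (charp f N)"
    unfolding charp_Suc by (simp add: algebra_simps)
  have ins: "{..<Suc N} = insert N {..<N}" by auto
  show ?case
  proof (cases m)
    case 0
    have "coeff (charp f (Suc N)) m = f N * esym N f {..<N}"
      using Suc.IH[of 0] 0 unfolding split by simp
    also have "\<dots> = esym (Suc N - m) f {..<Suc N}"
      unfolding ins 0 using esym_insert[of "{..<N}" N N f] esym_big[of "{..<N}" "Suc N" f] by simp
    finally show ?thesis .
  next
    case (Suc m')
    show ?thesis
    proof (cases "m' = N")
      case True
      have "coeff (charp f N) (Suc N) = 0"
        using degree_charp[of f N] by (simp add: coeff_eq_0)
      then have "coeff (charp f (Suc N)) m = coeff (charp f N) N"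
        unfolding split Suc True by simp
      also have "\<dots> = 1" using Suc.IH[of N] by simp
      finally show ?thesis using Suc True by simp
    next
      case False
      then have lt: "m' < N" using Suc.prems Suc by simp
      have "coeff (charp f (Suc N)) m = f N * coeff (charp f N) (Suc m') + coeff (charp f N) m'"
        unfolding split Suc by simp
      also have "\<dots> = f N * esym (N - Suc m') f {..<N} + esym (N - m') f {..<N}"
        using Suc.IH[of "Suc m'"] Suc.IH[of m'] lt by simp
      also have "N - m' = Suc (N - Suc m')" using lt by simp
      also have "f N * esym (N - Suc m') f {..<N} + esym (Suc (N - Suc m')) f {..<N}
          = esym (Suc (N - Suc m')) f {..<Suc N}"
        unfolding ins using esym_insert[of "{..<N}" N "N - Suc m'" f] by simp
      finally show ?thesis using Suc lt by (simp add: Suc_diff_Suc)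
    qed
  qed
qed

lemma lead_charp: "coeff (charp f N) N = 1"
  using coeff_charp[of N N f] by simp

lemma pderiv_charp_roots:
  assumes inj: "inj_on f {..<N}" and N2: "2 \<le> N"
  shows "\<exists>y. \<forall>j \<le> N - 1. real (N - j) * esym j f {..<N} = real N * esym j y {..<N - 1}"
proof -
  define P where "P = charp f N"
  define R where "R = (\<lambda>i. - f i) ` {..<N}"
  have injm: "inj_on (\<lambda>i. - f i) {..<N}" using inj by (auto simp: inj_on_def)
  have cardR: "card R = N" unfolding R_def using card_image[OF injm] by simp
  have finR: "finite R" unfolding R_def by simp
  define rs where "rs = sorted_list_of_set R"
  have len: "length rs = N" unfolding rs_def using cardR finR by simp
  have srt: "sorted_wrt (<) rs" unfolding rs_def by simp
  have setrs: "set rs = R" unfolding rs_def using finR by simp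
  have root: "poly P (rs ! k) = 0" if "k < N" for k
  proof -
    have "rs ! k \<in> R" using that len setrs nth_mem by metis
    then obtain i where i: "i < N" "rs ! k = - f i" unfolding R_def by auto
    have "(\<Prod>i'<N. rs ! k + f i') = 0"
      using i by (intro prod_zero) auto
    then show ?thesis unfolding P_def poly_charp .
  qed
  have lt: "rs ! k < rs ! k'" if "k < k'" "k' < N" for k k'
    using sorted_wrt_nth_less[OF srt that(1)] that len by simp
  have der: "(poly P has_derivative (\<lambda>v. poly (pderiv P) x * v)) (at x)" for x
    using poly_DERIV[of P x] unfolding has_field_derivative_def by simp
  have "\<forall>k. \<exists>z. k + 1 < N \<longrightarrow> rs ! k < z \<and> z < rs ! (k+1) \<and> poly (pderiv P) z = 0"
  proof
    fix k
    show "\<exists>z. k + 1 < N \<longrightarrow> rs ! k < z \<and> z < rs ! (k+1) \<and> poly (pderiv P) z = 0"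
    proof (cases "k + 1 < N")
      case True
      have "rs ! k < rs ! (k+1)" using lt[of k "k+1"] True by simp
      moreover have "poly P (rs ! k) = poly P (rs ! (k+1))" using root[of k] root[of "k+1"] True by simp
      moreover have "continuous_on {rs ! k..rs ! (k+1)} (poly P)"
        by (intro continuous_intros)
      ultimately obtain z where z: "rs ! k < z" "z < rs ! (k+1)"
        "(\<lambda>v. poly (pderiv P) z * v) = (\<lambda>v. 0)"
        using Rolle_deriv[of "rs ! k" "rs ! (k+1)" "poly P" "\<lambda>x v. poly (pderiv P) x * v"] der
        by blast
      have "poly (pderiv P) z = 0" using fun_cong[OF z(3), of 1] by simp
      then show ?thesis using z by blast
    qed simp
  qed
  then obtain xi where xi: "\<And>k. k + 1 < N \<Longrightarrow> rs ! k < xi k \<and> xi k < rs ! (k+1) \<and> poly (pderiv P) (xi k) = 0"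
    by (metis choice)
  have xi_mono: "xi k < xi k'" if "k < k'" "k' < N - 1" for k k'
  proof -
    have "xi k < rs ! (k+1)" using xi[of k] that by auto
    also have "rs ! (k+1) \<le> rs ! k'"
    proof (cases "k + 1 = k'")
      case True then show ?thesis by simp
    next
      case False
      then have "k + 1 < k'" using that(1) by simp
      moreover have "k' < N" using that(2) by simp
      ultimately have "rs ! (k+1) < rs ! k'" using lt[of "k+1" k'] by blast
      then show ?thesis by simp
    qed
    also have "rs ! k' < xi k'" using xi[of k'] that by auto
    finally show ?thesis .
  qed
  have xi_inj: "inj_on xi {..<N - 1}"
  proof (rule inj_onI)
    fix a b assume "a \<in> {..<N - 1}" "b \<in> {..<N - 1}" "xi a = xi b"
    then show "a = b" using xi_mono[of a b] xi_mono[of b a]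
      by (metis lessThan_iff linorder_neqE_nat order_less_irrefl)
  qed
  define y where "y = (\<lambda>k. - xi k)"
  define Q where "Q = smult (real N) (charp y (N - 1))"
  have Qroot: "poly Q (xi k) = 0" if "k < N - 1" for k
  proof -
    have "(\<Prod>i<N - 1. xi k + y i) = 0" using that unfolding y_def by (intro prod_zero) auto
    then show ?thesis unfolding Q_def by (simp add: poly_charp)
  qed
  have PQ: "pderiv P = Q"
  proof (rule ccontr)
    assume ne: "pderiv P \<noteq> Q"
    define D where "D = pderiv P - Q"
    have D0: "D \<noteq> 0" using ne unfolding D_def by simp
    have dP: "degree (pderiv P) = N - 1" unfolding P_def by (simp add: degree_pderiv degree_charp)
    have dQ: "degree Q = N - 1" unfolding Q_def using N2 by (simp add: degree_charp)
    have dD: "degree D \<le> N - 1" unfolding D_def using dP dQ by (intro degree_diff_le) auto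
    have cD: "coeff D (N - 1) = 0"
    proof -
      have "coeff (pderiv P) (N - 1) = real N"
        using N2 unfolding P_def coeff_pderiv by (simp add: lead_charp)
      moreover have "coeff Q (N - 1) = real N" unfolding Q_def by (simp add: lead_charp)
      ultimately show ?thesis unfolding D_def by simp
    qed
    have "degree D \<noteq> N - 1"
    proof
      assume "degree D = N - 1"
      then have "coeff D (degree D) = 0" using cD by simp
      then show False using leading_coeff_neq_0[OF D0] by simp
    qed
    then have dlt: "degree D < N - 1" using dD by simp
    have sub: "xi ` {..<N - 1} \<subseteq> {x. poly D x = 0}"
      unfolding D_def using xi Qroot by auto
    have "N - 1 = card (xi ` {..<N - 1})" using card_image[OF xi_inj] by simp
    also have "\<dots> \<le> card {x. poly D x = 0}"
      by (rule card_mono[OF poly_roots_finite[OF D0] sub])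
    also have "\<dots> \<le> degree D" by (rule card_poly_roots_bound[OF D0])
    finally show False using dlt by simp
  qed
  show ?thesis
  proof (intro exI allI impI)
    fix j assume j: "j \<le> N - 1"
    define n where "n = N - 1 - j"
    have sn: "Suc n = N - j" using j N2 unfolding n_def by simp
    have "coeff (pderiv P) n = real (Suc n) * coeff P (Suc n)" by (simp add: coeff_pderiv)
    also have "coeff P (Suc n) = esym j f {..<N}"
      unfolding P_def sn using coeff_charp[of "N - j" N f] j N2 by simp
    finally have a: "coeff (pderiv P) n = real (N - j) * esym j f {..<N}" using sn by simp
    have "coeff Q n = real N * esym (N - 1 - n) y {..<N - 1}"
      unfolding Q_def using coeff_charp[of n "N - 1" y] unfolding n_def by simp
    also have "N - 1 - n = j" unfolding n_def using j by simp
    finally have b: "coeff Q n = real N * esym j y {..<N - 1}" .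
    show "real (N - j) * esym j f {..<N} = real N * esym j y {..<N - 1}"
      using a b PQ by simp
  qed
qed

definition En :: "(nat \<Rightarrow> real) \<Rightarrow> nat \<Rightarrow> nat \<Rightarrow> real" where
  "En f N j = esym j f {..<N} / real (N choose j)"

lemma esym_two_bound:
  assumes "finite A"
  shows "2 * real (card A) * esym 2 f A \<le> (real (card A) - 1) * (esym 1 f A)^2"
proof -
  have e2: "2 * esym 2 f A = (sum f A)^2 - (\<Sum>i\<in>A. (f i)^2)" by (rule esym_2[OF assms])
  have e1: "esym 1 f A = sum f A" by (rule esym_1[OF assms])
  have cs: "(sum f A)^2 \<le> (\<Sum>i\<in>A. (f i)^2) * real (card A)"
    by (rule sum_squared_le_sum_of_squares)
  have "2 * real (card A) * esym 2 f A = real (card A) * (2 * esym 2 f A)" by simp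
  also have "\<dots> = real (card A) * ((sum f A)^2 - (\<Sum>i\<in>A. (f i)^2))" unfolding e2 ..
  also have "\<dots> \<le> (real (card A) - 1) * (sum f A)^2"
    using cs by (simp add: algebra_simps)
  finally show ?thesis using e1 by simp
qed

lemma esym_recip:
  assumes fin: "finite A" and nz: "\<And>i. i \<in> A \<Longrightarrow> f i \<noteq> 0" and m: "m \<le> card A"
  shows "esym m (\<lambda>i. 1 / f i) A * prod f A = esym (card A - m) f A"
proof -
  let ?X = "{S. S \<subseteq> A \<and> card S = m}"
  let ?Y = "{S. S \<subseteq> A \<and> card S = card A - m}"
  have inj: "inj_on (\<lambda>S. A - S) ?X"
  proof (rule inj_onI)
    fix S T assume "S \<in> ?X" "T \<in> ?X" "A - S = A - T"
    then show "S = T" by blast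
  qed
  have img: "(\<lambda>S. A - S) ` ?X = ?Y"
  proof (rule set_eqI, rule iffI)
    fix T assume "T \<in> (\<lambda>S. A - S) ` ?X"
    then obtain S where S: "S \<subseteq> A" "card S = m" "T = A - S" by auto
    have "card (A - S) = card A - card S" using S(1) fin by (simp add: card_Diff_subset finite_subset)
    then show "T \<in> ?Y" using S by auto
  next
    fix T assume T: "T \<in> ?Y"
    then have TA: "T \<subseteq> A" by simp
    have "card (A - T) = card A - card T" using TA fin by (simp add: card_Diff_subset finite_subset)
    then have "card (A - T) = m" using T m by simp
    moreover have "T = A - (A - T)" using TA by blast
    ultimately show "T \<in> (\<lambda>S. A - S) ` ?X" by blast
  qed
  have "esym (card A - m) f A = (\<Sum>S\<in>?X. prod f (A - S))"
    unfolding esym_def img[symmetric] by (rule sum.reindex[OF inj, unfolded comp_def])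
  also have "\<dots> = (\<Sum>S\<in>?X. prod (\<lambda>i. 1 / f i) S * prod f A)"
  proof (rule sum.cong[OF refl])
    fix S assume "S \<in> ?X"
    then have SA: "S \<subseteq> A" by simp
    have finS: "finite S" using SA fin finite_subset by blast
    have pA: "prod f A = prod f S * prod f (A - S)"
      using prod.subset_diff[OF SA fin, of f] by (simp add: mult.commute)
    have one: "prod (\<lambda>i. 1 / f i) S * prod f S = 1"
    proof -
      have "prod (\<lambda>i. 1 / f i) S * prod f S = (\<Prod>i\<in>S. 1 / f i * f i)"
        by (rule prod.distrib[symmetric])
      also have "\<dots> = 1" using SA nz by (intro prod.neutral) auto
      finally show ?thesis .
    qed
    then have "prod (\<lambda>i. 1 / f i) S * prod f A = (prod (\<lambda>i. 1 / f i) S * prod f S) * prod f (A - S)"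
      using pA by (simp add: mult.assoc)
    also have "\<dots> = prod f (A - S)" using one by simp
    finally show "prod f (A - S) = prod (\<lambda>i. 1 / f i) S * prod f A" by simp
  qed
  also have "\<dots> = esym m (\<lambda>i. 1 / f i) A * prod f A"
    unfolding esym_def by (simp add: sum_distrib_right)
  finally show ?thesis by simp
qed

definition NE :: "nat \<Rightarrow> bool" where
  "NE N \<longleftrightarrow> (\<forall>f i. i + 2 \<le> N \<longrightarrow> En f N i * En f N (i + 2) \<le> (En f N (i + 1))^2)"

lemma En_deriv:
  assumes "real (N - m) * esym m f {..<N} = real N * esym m y {..<N - 1}" and "m < N"
  shows "En y (N - 1) m = En f N m"
proof -
  define k where "k = real (N - m)"
  define A where "A = esym m f {..<N}"
  define B where "B = esym m y {..<N - 1}"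
  define Cn where "Cn = real (N choose m)"
  define Cm where "Cm = real ((N - 1) choose m)"
  have e1: "k * A = real N * B" using assms(1) unfolding k_def A_def B_def .
  have e2: "k * Cn = real N * Cm"
    unfolding k_def Cn_def Cm_def using binomial_absorb_comp[of N m] by (metis of_nat_mult)
  have kpos: "k > 0" unfolding k_def using assms(2) by simp
  have Npos: "real N > 0" using assms(2) by simp
  have c1: "Cn > 0" unfolding Cn_def using assms(2) by simp
  have c2: "Cm > 0" unfolding Cm_def using assms(2) by simp
  have "(k * real N) * (A * Cm) = (k * A) * (real N * Cm)" by (simp add: algebra_simps)
  also have "\<dots> = (real N * B) * (k * Cn)" using e1 e2 by simp
  also have "\<dots> = (k * real N) * (B * Cn)" by (simp add: algebra_simps)
  finally have "A * Cm = B * Cn" using kpos Npos by simp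
  then have "B / Cm = A / Cn" using c1 c2 by (simp add: field_simps)
  then show ?thesis unfolding En_def A_def B_def Cn_def Cm_def by simp
qed

lemma NE_generic:
  assumes IH: "NE (N - 1)" and inj: "inj_on f {..<N}" and nz: "\<And>k. k < N \<Longrightarrow> f k \<noteq> 0"
    and i: "i + 2 \<le> N"
  shows "En f N i * En f N (i + 2) \<le> (En f N (i + 1))^2"
proof (cases "i + 2 < N")
  case True
  have N2: "2 \<le> N" using i by simp
  obtain y where y: "\<forall>j \<le> N - 1. real (N - j) * esym j f {..<N} = real N * esym j y {..<N - 1}"
    using pderiv_charp_roots[OF inj N2] by blast
  have e: "En y (N - 1) m = En f N m" if "m \<le> i + 2" for m
  proof -
    have m1: "m \<le> N - 1" "m < N" using that True by auto
    show ?thesis by (rule En_deriv[OF y[rule_format, OF m1(1)] m1(2)])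
  qed
  have "En y (N - 1) i * En y (N - 1) (i + 2) \<le> (En y (N - 1) (i + 1))^2"
    using IH True unfolding NE_def by simp
  then show ?thesis using e[of i] e[of "i+1"] e[of "i+2"] by simp
next
  case False
  then have iN: "i + 2 = N" using i by simp
  define g where "g = (\<lambda>k. 1 / f k)"
  have fin: "finite {..<N}" by simp
  have cardN: "card {..<N} = N" by simp
  have nz': "\<And>k. k \<in> {..<N} \<Longrightarrow> f k \<noteq> 0" using nz by simp
  have r: "\<And>m. m \<le> N \<Longrightarrow> esym m g {..<N} * prod f {..<N} = esym (N - m) f {..<N}"
  proof -
    fix m :: nat assume "m \<le> N"
    then have "m \<le> card {..<N}" by simp
    from esym_recip[OF fin nz' this] show "esym m g {..<N} * prod f {..<N} = esym (N - m) f {..<N}"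
      unfolding g_def cardN .
  qed
  have pf: "prod f {..<N} = esym N f {..<N}" using r[of 0] by simp
  define a where "a = esym i f {..<N}"
  define b where "b = esym (i+1) f {..<N}"
  define c where "c = esym N f {..<N}"
  have N2i: "N - 2 = i" using iN by simp
  have N1i: "N - 1 = i + 1" using iN by simp
  have ra: "esym 2 g {..<N} * c = a" using r[of 2] iN unfolding a_def c_def pf[symmetric] N2i by simp
  have rb: "esym 1 g {..<N} * c = b"
  proof -
    have "N - 1 = i + 1" using iN by simp
    then show ?thesis using r[of 1] iN unfolding b_def c_def pf[symmetric] by simp
  qed
  have V: "2 * real N * esym 2 g {..<N} \<le> (real N - 1) * (esym 1 g {..<N})^2"
    using esym_two_bound[OF fin, of g] by simp
  have "2 * real N * esym 2 g {..<N} * c^2 \<le> (real N - 1) * (esym 1 g {..<N})^2 * c^2"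
    by (rule mult_right_mono[OF V]) simp
  moreover have k1: "2 * real N * a * c = 2 * real N * esym 2 g {..<N} * c^2"
    unfolding ra[symmetric] by (simp add: power2_eq_square)
  moreover have k2: "(real N - 1) * b^2 = (real N - 1) * (esym 1 g {..<N})^2 * c^2"
    unfolding rb[symmetric] by (simp add: power2_eq_square)
  ultimately have key: "2 * real N * a * c \<le> (real N - 1) * b^2" by (simp only:)
  have N2: "N \<ge> 2" using iN by simp
  have C0: "real (N choose i) = real N * (real N - 1) / 2"
  proof -
    have "N choose i = N choose 2" using binomial_symmetric[of 2 N] N2 unfolding N2i by simp
    moreover have "2 * (N choose 2) = N * (N - 1)"
      using times_binomial_minus1_eq[of 2 N] by simp
    ultimately have nat_eq: "2 * (N choose i) = N * (N - 1)" by simp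
    have "real (2 * (N choose i)) = real (N * (N - 1))" using nat_eq by (simp only:)
    then have "2 * real (N choose i) = real N * real (N - 1)" by simp
    then show ?thesis using N2 by (simp add: of_nat_diff)
  qed
  have C1: "real (N choose (i+1)) = real N"
  proof -
    have "N choose (i+1) = N choose 1" using binomial_symmetric[of 1 N] N2 unfolding N1i by simp
    then show ?thesis by simp
  qed
  have C2: "N choose (i+2) = 1" using iN by simp
  have Npos: "real N > 0" "real N - 1 > 0" using N2 by auto
  have "En f N i * En f N (i + 2) = 2 * a * c / (real N * (real N - 1))"
    unfolding En_def a_def[symmetric] C0 C2 using iN c_def by simp
  also have "\<dots> \<le> (real N - 1) * b^2 / (real N * real N * (real N - 1))"
  proof -
    have "2 * a * c / (real N * (real N - 1)) = 2 * real N * a * c / (real N * real N * (real N - 1))"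
      using Npos by (simp add: field_simps)
    also have "\<dots> \<le> (real N - 1) * b^2 / (real N * real N * (real N - 1))"
      by (rule divide_right_mono[OF key]) (use Npos in simp)
    finally show ?thesis .
  qed
  also have "\<dots> = b^2 / (real N * real N)"
  proof -
    have "(real N - 1) * b^2 / (real N * real N * (real N - 1)) = ((real N - 1) * b^2) / ((real N - 1) * (real N * real N))"
      by (simp add: mult.commute)
    also have "\<dots> = b^2 / (real N * real N)" using Npos(2) by simp
    finally show ?thesis .
  qed
  also have "\<dots> = (En f N (i + 1))^2"
    unfolding En_def b_def[symmetric] C1 by (simp add: power_divide power2_eq_square)
  finally show ?thesis .
qed

lemma isCont_esym: "isCont (\<lambda>e. esym j (\<lambda>k. f k + e * c k) A) x"
  unfolding esym_def by (intro continuous_intros)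

lemma NE_density:
  assumes gen: "\<And>g. inj_on g {..<N} \<Longrightarrow> (\<forall>k<N. g k \<noteq> 0) \<Longrightarrow>
      En g N i * En g N (i+2) \<le> (En g N (i+1))^2"
  shows "En f N i * En f N (i+2) \<le> (En f N (i+1))^2"
proof (rule ccontr)
  assume neg: "\<not> ?thesis"
  define fe where "fe = (\<lambda>e k. f k + e * real (Suc k))"
  define h where "h = (\<lambda>e. (En (fe e) N (i+1))^2 - En (fe e) N i * En (fe e) N (i+2))"
  have fe0: "fe 0 = f" unfolding fe_def by simp
  have h0: "h 0 < 0" using neg unfolding h_def fe0 by simp
  have cont: "isCont h 0"
    unfolding h_def En_def fe_def divide_inverse
    by (intro continuous_intros isCont_esym)
  have "\<forall>\<^sub>F e in at 0. h e < 0"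
    using order_tendstoD(2)[OF cont[unfolded isCont_def] h0] .
  then obtain d where d: "d > 0" "\<And>e. e \<noteq> 0 \<Longrightarrow> dist e 0 < d \<Longrightarrow> h e < 0"
    unfolding eventually_at by auto
  define B where "B = (\<Union>k\<in>{..<N}. \<Union>k'\<in>{..<N}. {(f k' - f k) / (real k - real k')})
      \<union> (\<lambda>k. - f k / real (Suc k)) ` {..<N}"
  have finB: "finite B" unfolding B_def by simp
  have "infinite ({0<..<d} - B)" using d(1) finB by (simp add: Diff_infinite_finite)
  then obtain e where e: "e \<in> {0<..<d}" "e \<notin> B" by (metis Diff_iff finite.emptyI infinite_imp_nonempty ex_in_conv)
  have inj: "inj_on (fe e) {..<N}"
  proof (rule inj_onI)
    fix k k' assume k: "k \<in> {..<N}" "k' \<in> {..<N}" and eq: "fe e k = fe e k'"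
    show "k = k'"
    proof (rule ccontr)
      assume ne: "k \<noteq> k'"
      then have nz: "real k - real k' \<noteq> 0" by simp
      have "e * (real k - real k') = f k' - f k" using eq unfolding fe_def by (simp add: algebra_simps)
      then have "e = (f k' - f k) / (real k - real k')" using nz by (simp add: field_simps)
      then have "e \<in> B" unfolding B_def using k by blast
      then show False using e(2) by simp
    qed
  qed
  have nz: "\<forall>k<N. fe e k \<noteq> 0"
  proof (intro allI impI notI)
    fix k assume k: "k < N" and z: "fe e k = 0"
    have "e * real (Suc k) = - f k" using z unfolding fe_def by (simp add: algebra_simps)
    then have "e = - f k / real (Suc k)" by (simp add: field_simps)
    then have "e \<in> B" unfolding B_def using k by blast
    then show False using e(2) by simp
  qed
  have "h e \<ge> 0" using gen[OF inj nz] unfolding h_def by simp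
  moreover have "h e < 0" using d(2)[of e] e(1) by simp
  ultimately show False by simp
qed

lemma NE_all: "NE N"
proof (induction N)
  case 0
  then show ?case unfolding NE_def by simp
next
  case (Suc N)
  show ?case unfolding NE_def
  proof (intro allI impI)
    fix f i assume i: "i + 2 \<le> Suc N"
    show "En f (Suc N) i * En f (Suc N) (i + 2) \<le> (En f (Suc N) (i + 1))^2"
    proof (rule NE_density)
      fix g :: "nat \<Rightarrow> real" assume "inj_on g {..<Suc N}" "\<forall>k<Suc N. g k \<noteq> 0"
      then show "En g (Suc N) i * En g (Suc N) (i + 2) \<le> (En g (Suc N) (i + 1))^2"
        using NE_generic[of "Suc N" g i] Suc.IH i by simp
    qed
  qed
qed

lemma binom_logconc:
  assumes "i + 2 \<le> N"
  shows "real (N choose i) * real (N choose (i+2)) \<le> (real (N choose (i+1)))^2"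
proof -
  have a1: "real (Suc i) * real (N choose Suc i) = real (N - i) * real (N choose i)"
  proof -
    have "Suc i * (N choose Suc i) = (N - i) * (N choose i)"
      using binomial_absorption[of i N] binomial_absorb_comp[of N i] by simp
    then show ?thesis by (metis of_nat_mult)
  qed
  have a2: "real (Suc (Suc i)) * real (N choose Suc (Suc i)) = real (N - Suc i) * real (N choose Suc i)"
  proof -
    have "Suc (Suc i) * (N choose Suc (Suc i)) = (N - Suc i) * (N choose Suc i)"
      using binomial_absorption[of "Suc i" N] binomial_absorb_comp[of N "Suc i"] by simp
    then show ?thesis by (metis of_nat_mult)
  qed
  define X where "X = real (N - i) * real (Suc (Suc i))"
  have Xpos: "X > 0" unfolding X_def using assms by simp
  have r1: "real (N - i) = real N - real i" using assms by (simp add: of_nat_diff)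
  have r2: "real (N - Suc i) = real N - real i - 1" using assms by (simp add: of_nat_diff)
  have "(real (N choose i) * real (N choose (i+2))) * X
      = (real (N - i) * real (N choose i)) * (real (Suc (Suc i)) * real (N choose Suc (Suc i)))"
    unfolding X_def by (simp add: algebra_simps)
  also have "\<dots> = (real (Suc i) * real (N - Suc i)) * (real (N choose (i+1)))^2"
    unfolding a1[symmetric] a2 by (simp add: power2_eq_square algebra_simps)
  also have "\<dots> \<le> X * (real (N choose (i+1)))^2"
  proof (rule mult_right_mono)
    show "real (Suc i) * real (N - Suc i) \<le> X" unfolding X_def r1 r2
      by (simp add: algebra_simps)
  qed simp
  finally show ?thesis using Xpos by (simp add: mult.commute)
qed

lemma newton_weak:
  assumes fin: "finite A"
  shows "esym i f A * esym (i+2) f A \<le> (esym (i+1) f A)^2"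
proof (cases "i + 2 \<le> card A")
  case False
  then have "esym (i+2) f A = 0" using esym_big[OF fin] by simp
  then show ?thesis by simp
next
  case True
  define N where "N = card A"
  obtain h where h: "bij_betw h {0..<N} A" unfolding N_def using ex_bij_betw_nat_finite[OF fin] by blast
  have h': "bij_betw h {..<N} A" using h by (simp add: atLeast0LessThan)
  define g where "g = f \<circ> h"
  have eq: "esym j f A = esym j g {..<N}" for j unfolding g_def by (rule esym_reindex[OF h'])
  define a where "a = esym i f A"
  define b where "b = esym (i+1) f A"
  define c where "c = esym (i+2) f A"
  define Ci where "Ci = real (N choose i)"
  define Ci1 where "Ci1 = real (N choose (i+1))"
  define Ci2 where "Ci2 = real (N choose (i+2))"
  have iN: "i + 2 \<le> N" using True unfolding N_def .
  have pos: "Ci > 0" "Ci1 > 0" "Ci2 > 0" unfolding Ci_def Ci1_def Ci2_def using iN by auto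
  have lc: "Ci * Ci2 \<le> Ci1^2" unfolding Ci_def Ci1_def Ci2_def by (rule binom_logconc[OF iN])
  have ne: "En g N i * En g N (i+2) \<le> (En g N (i+1))^2" using NE_all[of N] iN unfolding NE_def by simp
  then have ne': "(a * c) / (Ci * Ci2) \<le> b^2 / Ci1^2"
    unfolding En_def eq[symmetric] a_def[symmetric] b_def[symmetric] c_def[symmetric]
      Ci_def[symmetric] Ci1_def[symmetric] Ci2_def[symmetric]
    by (simp add: power_divide)
  show ?thesis
  proof (cases "a * c \<le> 0")
    case True
    then show ?thesis unfolding a_def c_def b_def by (smt (verit) zero_le_power2)
  next
    case False
    have "a * c = ((a * c) / (Ci * Ci2)) * (Ci * Ci2)" using pos by simp
    also have "\<dots> \<le> (b^2 / Ci1^2) * (Ci * Ci2)"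
      by (rule mult_right_mono[OF ne']) (use pos in simp)
    also have "\<dots> \<le> (b^2 / Ci1^2) * Ci1^2"
      by (rule mult_left_mono[OF lc]) simp
    also have "\<dots> = b^2" using pos by simp
    finally show ?thesis unfolding a_def b_def c_def .
  qed
qed

lemma esym_pos_le:
  assumes "finite A" "in_Gamma k f A" "l \<le> k"
  shows "esym l f A > 0"
proof (cases "l = 0")
  case True then show ?thesis using assms(1) by simp
next
  case False then show ?thesis using assms unfolding in_Gamma_def by auto
qed

lemma gamma_K1:
  assumes fin: "finite A" and iA: "i \<in> A"
  shows "in_Gamma k f A \<Longrightarrow> in_Gamma (k - 1) f (A - {i})"
proof (induction k)
  case 0
  then show ?case unfolding in_Gamma_def by simp
next
  case (Suc k)
  define A' where "A' = A - {i}"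
  have fin': "finite A'" unfolding A'_def using fin by simp
  define s where "s = (\<lambda>j. esym j f A')"
  have gk: "in_Gamma k f A" using Suc.prems unfolding in_Gamma_def by auto
  have IH: "in_Gamma (k - 1) f A'" using Suc.IH[OF gk] unfolding A'_def .
  show ?case
  proof (cases k)
    case 0
    then show ?thesis unfolding in_Gamma_def by simp
  next
    case (Suc k0)
    have sk0: "s k0 > 0" unfolding s_def by (rule esym_pos_le[OF fin' IH]) (simp add: Suc)
    have rec: "esym (Suc m) f A = s (Suc m) + f i * s m" for m
      unfolding s_def A'_def using esym_remove[OF fin iA] by simp
    have p1: "esym (Suc k0) f A > 0" using Suc.prems unfolding in_Gamma_def Suc by auto
    have p2: "esym (Suc (Suc k0)) f A > 0" using Suc.prems unfolding in_Gamma_def Suc by auto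
    have newt: "s k0 * s (k0 + 2) \<le> (s (k0 + 1))^2" unfolding s_def by (rule newton_weak[OF fin'])
    have "s (Suc k0) > 0"
    proof (rule ccontr)
      assume "\<not> s (Suc k0) > 0"
      then have sn: "s (Suc k0) \<le> 0" by simp
      define x where "x = f i"
      have h1: "x * s k0 \<ge> - s (Suc k0)" using p1 rec[of k0] unfolding x_def by simp
      have h2: "s (Suc (Suc k0)) > - (x * s (Suc k0))" using p2 rec[of "Suc k0"] unfolding x_def by simp
      have h3: "(- s (Suc k0)) * (x * s k0) \<ge> (- s (Suc k0)) * (- s (Suc k0))"
        by (rule mult_left_mono[OF h1]) (use sn in simp)
      have h4: "s k0 * s (Suc (Suc k0)) > s k0 * (- (x * s (Suc k0)))"
        by (rule mult_strict_left_mono[OF h2 sk0])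
      have eq: "s k0 * (- (x * s (Suc k0))) = (- s (Suc k0)) * (x * s k0)" by (simp add: algebra_simps)
      have h5: "(- s (Suc k0)) * (x * s k0) < s k0 * s (Suc (Suc k0))" using h4 unfolding eq .
      have "(- s (Suc k0)) * (- s (Suc k0)) < s k0 * s (Suc (Suc k0))" by (rule le_less_trans[OF h3 h5])
      then have "s k0 * s (Suc (Suc k0)) > (s (Suc k0))^2" by (simp add: power2_eq_square)
      then show False using newt by (simp add: numeral_2_eq_2)
    qed
    then show ?thesis using IH unfolding in_Gamma_def s_def A'_def Suc
      by (auto simp: le_Suc_eq)
  qed
qed

lemma gamma_K2:
  assumes fin: "finite B" and G: "\<forall>j\<in>{1..K}. esym j f B > 0" and l: "1 \<le> l" "l \<le> K"
  shows "esym (l - 1) f B * esym (K + 1) f B \<le> esym K f B * esym l f B"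
proof -
  define s where "s = (\<lambda>j. esym j f B)"
  have spos: "s j > 0" if "j \<le> K" for j
  proof (cases "j = 0")
    case True then show ?thesis unfolding s_def using fin by simp
  next
    case False then show ?thesis unfolding s_def using G that by auto
  qed
  have newt: "s j * s (j + 2) \<le> (s (j + 1))^2" for j unfolding s_def by (rule newton_weak[OF fin])
  show ?thesis
  proof (cases "s (K + 1) > 0")
    case False
    have "s (l - 1) > 0" using spos[of "l - 1"] l by simp
    then have "s (l - 1) * s (K + 1) \<le> 0"
      by (intro mult_nonneg_nonpos) (use False in auto)
    moreover have "s K * s l > 0" using spos[of K] spos[of l] l by simp
    ultimately show ?thesis unfolding s_def by simp
  next
    case True
    have spos': "s j > 0" if "j \<le> K + 1" for j
      using spos[of j] True that by (cases "j = K + 1") auto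
    have chain: "l + t \<le> K \<Longrightarrow> s (l - 1) * s (l + t + 1) \<le> s (l + t) * s l" for t
    proof (induction t)
      case 0
      have "s (l - 1) * s (l - 1 + 2) \<le> (s (l - 1 + 1))^2" by (rule newt)
      moreover have "l - 1 + 2 = l + 1" "l - 1 + 1 = l" using l by auto
      ultimately show ?case by (simp add: power2_eq_square)
    next
      case (Suc t)
      define m where "m = l + t"
      have mK: "m + 1 \<le> K" using Suc.prems unfolding m_def by simp
      have IH: "s (l - 1) * s (m + 1) \<le> s m * s l" using Suc.IH Suc.prems unfolding m_def by simp
      have nm: "s m * s (m + 2) \<le> (s (m + 1))^2" by (rule newt)
      have pm: "s m > 0" "s (m+1) > 0" "s (l - 1) > 0" "s l > 0" using spos' mK l by auto
      have "s m * (s (l - 1) * s (m + 2)) = s (l - 1) * (s m * s (m + 2))" by (simp add: algebra_simps)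
      also have "\<dots> \<le> s (l - 1) * (s (m + 1))^2" by (rule mult_left_mono[OF nm]) (use pm in simp)
      also have "\<dots> = s (m + 1) * (s (l - 1) * s (m + 1))" by (simp add: power2_eq_square algebra_simps)
      also have "\<dots> \<le> s (m + 1) * (s m * s l)" by (rule mult_left_mono[OF IH]) (use pm in simp)
      also have "\<dots> = s m * (s (m + 1) * s l)" by (simp add: algebra_simps)
      finally have "s (l - 1) * s (m + 2) \<le> s (m + 1) * s l" using pm(1) by simp
      then show ?case unfolding m_def by (simp add: add.assoc)
    qed
    have "s (l - 1) * s (l + (K - l) + 1) \<le> s (l + (K - l)) * s l" by (rule chain) (use l in simp)
    moreover have "l + (K - l) = K" using l by simp
    ultimately show ?thesis unfolding s_def by simp
  qed
qed

lemma gamma_mono1: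
  assumes fin: "finite A" and iA: "i \<in> A" and G: "in_Gamma k f A" and d: "d \<ge> 0" and lk: "l < k"
  shows "in_Gamma k (f(i := f i + d)) A \<and>
         esym k f A * esym l (f(i := f i + d)) A \<le> esym k (f(i := f i + d)) A * esym l f A"
proof -
  define g where "g = f(i := f i + d)"
  define A' where "A' = A - {i}"
  have fin': "finite A'" unfolding A'_def using fin by simp
  define s where "s = (\<lambda>j. esym j f A')"
  have eqg: "esym j g A' = s j" for j unfolding s_def A'_def g_def by (rule esym_cong) auto
  have recf: "esym (Suc m) f A = s (Suc m) + f i * s m" for m
    unfolding s_def A'_def using esym_remove[OF fin iA] by simp
  have recg: "esym (Suc m) g A = s (Suc m) + (f i + d) * s m" for m
    using esym_remove[OF fin iA, of m g] eqg unfolding A'_def g_def by simp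
  have inc: "esym (Suc m) g A = esym (Suc m) f A + d * s m" for m
    using recf[of m] recg[of m] by (simp add: algebra_simps)
  have K1: "in_Gamma (k - 1) f A'" unfolding A'_def by (rule gamma_K1[OF fin iA G])
  have spos: "s m > 0" if "m \<le> k - 1" for m unfolding s_def by (rule esym_pos_le[OF fin' K1 that])
  have Gg: "in_Gamma k g A"
    unfolding in_Gamma_def
  proof
    fix j assume j: "j \<in> {1..k}"
    then obtain m where m: "j = Suc m" by (cases j) auto
    have "m \<le> k - 1" using j m by auto
    then have "s m > 0" by (rule spos)
    then have "d * s m \<ge> 0" using d by simp
    moreover have "esym j f A > 0" using G j unfolding in_Gamma_def by auto
    ultimately show "esym j g A > 0" using inc[of m] m by simp
  qed
  have ratio: "esym k f A * esym l g A \<le> esym k g A * esym l f A"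
  proof (cases l)
    case 0
    obtain k0 where k0: "k = Suc k0" using lk by (cases k) auto
    have "d * s k0 \<ge> 0" using spos[of k0] d k0 by simp
    then show ?thesis using inc[of k0] fin unfolding 0 k0 by simp
  next
    case (Suc l0)
    obtain k0 where k0: "k = Suc k0" using lk by (cases k) auto
    have l1: "1 \<le> l" "l \<le> k0" using Suc lk k0 by auto
    have GA': "\<forall>j\<in>{1..k0}. esym j f A' > 0" using K1 k0 unfolding in_Gamma_def by simp
    have K2: "esym (l - 1) f A' * esym (k0 + 1) f A' \<le> esym k0 f A' * esym l f A'"
      by (rule gamma_K2[OF fin' GA' l1])
    then have K2': "s l0 * s k \<le> s k0 * s l" unfolding s_def using Suc k0 by simp
    define x where "x = f i"
    have Fk: "esym k f A = s k + x * s k0" using recf[of k0] k0 unfolding x_def by simp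
    have Fl: "esym l f A = s l + x * s l0" using recf[of l0] Suc unfolding x_def by simp
    have Gk: "esym k g A = esym k f A + d * s k0" using inc[of k0] k0 by simp
    have Gl: "esym l g A = esym l f A + d * s l0" using inc[of l0] Suc by simp
    have "esym k g A * esym l f A - esym k f A * esym l g A
        = d * (s k0 * esym l f A - esym k f A * s l0)"
      unfolding Gk Gl by (simp add: algebra_simps)
    also have "s k0 * esym l f A - esym k f A * s l0 = s k0 * s l - s l0 * s k"
      unfolding Fk Fl by (simp add: algebra_simps)
    finally have "esym k g A * esym l f A - esym k f A * esym l g A = d * (s k0 * s l - s l0 * s k)" .
    moreover have "d * (s k0 * s l - s l0 * s k) \<ge> 0" using d K2' by simp
    ultimately show ?thesis by simp
  qed
  show ?thesis using Gg ratio unfolding g_def by simp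
qed

lemma gamma_mono:
  assumes fin: "finite A" and G: "in_Gamma k f A" and lk: "l < k" and le: "\<And>i. i \<in> A \<Longrightarrow> f i \<le> g i"
  shows "in_Gamma k g A \<and> esym k f A * esym l g A \<le> esym k g A * esym l f A"
proof -
  define h where "h = (\<lambda>D i. if i \<in> D then g i else f i)"
  have main: "in_Gamma k (h D) A \<and> esym k f A * esym l (h D) A \<le> esym k (h D) A * esym l f A"
    if "D \<subseteq> A" for D
    using finite_subset[OF that fin] that
  proof (induction D rule: finite_subset_induct)
    case empty
    have "h {} = f" unfolding h_def by auto
    then show ?case using G by (simp add: mult.commute)
  next
    case (insert a D)
    have IH1: "in_Gamma k (h D) A" and IH2: "esym k f A * esym l (h D) A \<le> esym k (h D) A * esym l f A"
      using insert.IH by auto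
    have eqh: "h (insert a D) = (h D)(a := h D a + (g a - f a))"
      unfolding h_def using insert.hyps by auto
    have st: "in_Gamma k (h (insert a D)) A \<and>
        esym k (h D) A * esym l (h (insert a D)) A \<le> esym k (h (insert a D)) A * esym l (h D) A"
      unfolding eqh by (rule gamma_mono1[OF fin insert.hyps(2) IH1 _ lk]) (use le insert.hyps(2) in simp)
    have pos1: "esym l f A > 0" by (rule esym_pos_le[OF fin G]) (use lk in simp)
    have pos2: "esym l (h D) A > 0" by (rule esym_pos_le[OF fin IH1]) (use lk in simp)
    have pos3: "esym l (h (insert a D)) A > 0" by (rule esym_pos_le[OF fin st[THEN conjunct1]]) (use lk in simp)
    define a1 where "a1 = esym k f A"
    define a2 where "a2 = esym k (h D) A"
    define a3 where "a3 = esym k (h (insert a D)) A"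
    define b1 where "b1 = esym l f A"
    define b2 where "b2 = esym l (h D) A"
    define b3 where "b3 = esym l (h (insert a D)) A"
    have i1: "a1 * b2 \<le> a2 * b1" using IH2 unfolding a1_def a2_def b1_def b2_def .
    have i2: "a2 * b3 \<le> a3 * b2" using st unfolding a2_def a3_def b2_def b3_def by simp
    have "b2 * (a1 * b3) = (a1 * b2) * b3" by (simp add: algebra_simps)
    also have "\<dots> \<le> (a2 * b1) * b3" by (rule mult_right_mono[OF i1]) (use pos3 in \<open>simp add: b3_def\<close>)
    also have "\<dots> = (a2 * b3) * b1" by (simp add: algebra_simps)
    also have "\<dots> \<le> (a3 * b2) * b1" by (rule mult_right_mono[OF i2]) (use pos1 in \<open>simp add: b1_def\<close>)
    also have "\<dots> = b2 * (a3 * b1)" by (simp add: algebra_simps)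
    finally have "a1 * b3 \<le> a3 * b1" using pos2 unfolding b2_def by simp
    then show ?case using st unfolding a1_def a3_def b1_def b3_def by simp
  qed
  have "h A = g \<or> True" by simp
  have eq: "esym j (h A) A = esym j g A" for j by (rule esym_cong) (simp add: h_def)
  have eqG: "in_Gamma k (h A) A = in_Gamma k g A" unfolding in_Gamma_def eq ..
  show ?thesis using main[of A] eq eqG by simp
qed

lemma bij_betw_upd_insert:
  assumes "bij_betw f A B" "a \<notin> A" "b \<notin> B"
  shows "bij_betw (f(a := b)) (insert a A) (insert b B)"
proof -
  have inj: "inj_on f A" by (rule bij_betw_imp_inj_on[OF assms(1)])
  have im: "f ` A = B" by (rule bij_betw_imp_surj_on[OF assms(1)])
  have eqA: "\<And>x. x \<in> A \<Longrightarrow> (f(a := b)) x = f x" using assms(2) by auto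
  have injA: "inj_on (f(a := b)) A" using inj eqA unfolding inj_on_def by auto
  have "(f(a := b)) ` A = f ` A" by (rule image_cong[OF refl eqA])
  then have imA: "(f(a := b)) ` A = B" using im by simp
  have Aa: "A - {a} = A" using assms(2) by simp
  have "inj_on (f(a := b)) (insert a A)"
    unfolding inj_on_insert Aa using injA imA assms(3) by simp
  moreover have "(f(a := b)) ` insert a A = insert b B"
    by (simp only: image_insert fun_upd_same imA)
  ultimately show ?thesis unfolding bij_betw_def by simp
qed

lemma greedy_match:
  fixes lam mu :: "nat \<Rightarrow> real"
  assumes "finite I" "finite J" "card I = card J"
    and "\<And>c. card {i\<in>I. lam i \<ge> c} \<le> card {j\<in>J. mu j \<ge> c}"
  shows "\<exists>p. bij_betw p I J \<and> (\<forall>i\<in>I. lam i \<le> mu (p i))"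
  using assms
proof (induction "card I" arbitrary: I J)
  case 0
  then have "I = {}" "J = {}" by auto
  moreover have "bij_betw id {} {}" by simp
  ultimately show ?case by blast
next
  case (Suc n)
  have Ine: "I \<noteq> {}" and Jne: "J \<noteq> {}" using Suc.hyps(2) Suc.prems(3) by auto
  define i0 where "i0 = (SOME i. i \<in> I \<and> lam i = Max (lam ` I))"
  have "Max (lam ` I) \<in> lam ` I" using Suc.prems(1) Ine by simp
  then have "\<exists>i. i \<in> I \<and> lam i = Max (lam ` I)" by auto
  then have i0: "i0 \<in> I" "lam i0 = Max (lam ` I)" unfolding i0_def by (metis (mono_tags, lifting) someI_ex)+
  have i0max: "lam i \<le> lam i0" if "i \<in> I" for i using i0(2) Suc.prems(1) that by simp
  define j0 where "j0 = (SOME j. j \<in> J \<and> mu j = Max (mu ` J))"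
  have "Max (mu ` J) \<in> mu ` J" using Suc.prems(2) Jne by simp
  then have "\<exists>j. j \<in> J \<and> mu j = Max (mu ` J)" by auto
  then have j0: "j0 \<in> J" "mu j0 = Max (mu ` J)" unfolding j0_def by (metis (mono_tags, lifting) someI_ex)+
  have j0max: "mu j \<le> mu j0" if "j \<in> J" for j using j0(2) Suc.prems(2) that by simp
  have "card {i\<in>I. lam i \<ge> lam i0} \<ge> 1"
  proof -
    have "i0 \<in> {i\<in>I. lam i \<ge> lam i0}" using i0 by simp
    moreover have "finite {i\<in>I. lam i \<ge> lam i0}" using Suc.prems(1) by simp
    ultimately show ?thesis by (metis One_nat_def Suc_leI card_gt_0_iff empty_iff)
  qed
  then have "card {j\<in>J. mu j \<ge> lam i0} \<ge> 1" using Suc.prems(4)[of "lam i0"] by simp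
  then have "{j\<in>J. mu j \<ge> lam i0} \<noteq> {}" by (cases "{j\<in>J. mu j \<ge> lam i0} = {}") auto
  then obtain j1 where "j1 \<in> J" "mu j1 \<ge> lam i0" by auto
  then have lm0: "lam i0 \<le> mu j0" using j0max by force
  define I' where "I' = I - {i0}"
  define J' where "J' = J - {j0}"
  have cI: "card I' = n" unfolding I'_def using Suc.hyps(2) i0(1) Suc.prems(1) by simp
  have cJ: "card J' = n" unfolding J'_def using Suc.hyps(2) Suc.prems(3) j0(1) Suc.prems(2) by simp
  have cnt': "card {i\<in>I'. lam i \<ge> c} \<le> card {j\<in>J'. mu j \<ge> c}" for c
  proof (cases "c \<le> lam i0")
    case True
    have e1: "{i\<in>I'. lam i \<ge> c} = {i\<in>I. lam i \<ge> c} - {i0}" unfolding I'_def by auto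
    have e2: "{j\<in>J'. mu j \<ge> c} = {j\<in>J. mu j \<ge> c} - {j0}" unfolding J'_def by auto
    have m1: "i0 \<in> {i\<in>I. lam i \<ge> c}" using i0 True by simp
    have m2: "j0 \<in> {j\<in>J. mu j \<ge> c}" using j0 True lm0 by simp
    have f1: "finite {i\<in>I. lam i \<ge> c}" using Suc.prems(1) by simp
    have f2: "finite {j\<in>J. mu j \<ge> c}" using Suc.prems(2) by simp
    show ?thesis unfolding e1 e2 using card_Diff_singleton[OF m1] card_Diff_singleton[OF m2]
      Suc.prems(4)[of c] by simp
  next
    case False
    have e: "{i\<in>I'. lam i \<ge> c} = {}"
    proof -
      have False if "i \<in> I'" "lam i \<ge> c" for i
      proof -
        have "lam i \<le> lam i0" using i0max that(1) unfolding I'_def by auto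
        then show False using False that(2) by simp
      qed
      then show ?thesis by blast
    qed
    show ?thesis unfolding e by simp
  qed
  have fI': "finite I'" "finite J'" unfolding I'_def J'_def using Suc.prems by auto
  obtain p where p: "bij_betw p I' J'" "\<forall>i\<in>I'. lam i \<le> mu (p i)"
    using Suc.hyps(1)[of I' J'] cI cJ fI' cnt' by auto
  have bij: "bij_betw (p(i0 := j0)) (insert i0 I') (insert j0 J')"
    by (rule bij_betw_upd_insert[OF p(1)]) (auto simp: I'_def J'_def)
  have "insert i0 I' = I" "insert j0 J' = J" unfolding I'_def J'_def using i0 j0 by auto
  then have "bij_betw (p(i0 := j0)) I J" using bij by simp
  moreover have "\<forall>i\<in>I. lam i \<le> mu ((p(i0 := j0)) i)"
    using p(2) lm0 unfolding I'_def by auto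
  ultimately show ?case by blast
qed

lemma finite_multi_indices: "finite (multi_indices n P)"
proof -
  have "multi_indices n P \<subseteq> Pow {1..n}" unfolding multi_indices_def by auto
  then show ?thesis by (rule finite_subset) simp
qed

lemma spectral_compare:
  fixes lam mu :: "nat \<Rightarrow> real"
  assumes cnt: "\<And>c. card {i\<in>{1..n}. lam i \<ge> c} \<le> card {j\<in>{1..n}. mu j \<ge> c}"
    and G: "in_Gamma k (Lam lam) (multi_indices n P)" and lk: "l < k"
  shows "in_Gamma k (Lam mu) (multi_indices n P) \<and>
    esym k (Lam lam) (multi_indices n P) * esym l (Lam mu) (multi_indices n P)
      \<le> esym k (Lam mu) (multi_indices n P) * esym l (Lam lam) (multi_indices n P)"
proof -
  define M where "M = multi_indices n P"
  have finM: "finite M" unfolding M_def by (rule finite_multi_indices)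
  obtain p where p: "bij_betw p {1..n} {1..n}" "\<forall>i\<in>{1..n}. lam i \<le> mu (p i)"
    using greedy_match[of "{1..n}" "{1..n}" lam mu] cnt by auto
  have injp: "inj_on p {1..n}" by (rule bij_betw_imp_inj_on[OF p(1)])
  have imp: "p ` {1..n} = {1..n}" by (rule bij_betw_imp_surj_on[OF p(1)])
  have injP: "inj_on ((`) p) M"
  proof (rule inj_onI)
    fix S T assume "S \<in> M" "T \<in> M" "p ` S = p ` T"
    then show "S = T" using inj_on_image_eq_iff[OF injp, of S T] unfolding M_def multi_indices_def by auto
  qed
  have sub: "(`) p ` M \<subseteq> M"
  proof
    fix X assume "X \<in> (`) p ` M"
    then obtain S where S: "S \<in> M" "X = p ` S" by auto
    have S1: "S \<subseteq> {1..n}" "card S = P" using S(1) unfolding M_def multi_indices_def by auto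
    have "card (p ` S) = card S" by (rule card_image[OF inj_on_subset[OF injp S1(1)]])
    moreover have "p ` S \<subseteq> {1..n}" using S1(1) imp by auto
    ultimately show "X \<in> M" using S S1 unfolding M_def multi_indices_def by auto
  qed
  have "card ((`) p ` M) = card M" by (rule card_image[OF injP])
  then have imP: "(`) p ` M = M" by (rule card_subset_eq[OF finM sub])
  have bijP: "bij_betw ((`) p) M M" unfolding bij_betw_def using injP imP by simp
  define g where "g = Lam mu \<circ> (`) p"
  have le: "Lam lam S \<le> g S" if "S \<in> M" for S
  proof -
    have S1: "S \<subseteq> {1..n}" using that unfolding M_def multi_indices_def by auto
    have "g S = (\<Sum>j\<in>p ` S. mu j)" unfolding g_def Lam_def by simp
    also have "\<dots> = (\<Sum>i\<in>S. mu (p i))"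
      by (rule sum.reindex[OF inj_on_subset[OF injp S1], unfolded comp_def])
    finally have gS: "g S = (\<Sum>i\<in>S. mu (p i))" .
    have "Lam lam S = (\<Sum>i\<in>S. lam i)" unfolding Lam_def ..
    also have "\<dots> \<le> (\<Sum>i\<in>S. mu (p i))" by (rule sum_mono) (use p(2) S1 in auto)
    finally show ?thesis using gS by simp
  qed
  have mono: "in_Gamma k g M \<and> esym k (Lam lam) M * esym l g M \<le> esym k g M * esym l (Lam lam) M"
    by (rule gamma_mono[OF finM G[folded M_def] lk le])
  have eq: "esym j (Lam mu) M = esym j g M" for j unfolding g_def by (rule esym_reindex[OF bijP])
  have "in_Gamma k (Lam mu) M" using mono unfolding in_Gamma_def eq by simp
  then have "in_Gamma k (Lam mu) M \<and> esym k (Lam lam) M * esym l (Lam mu) M \<le> esym k (Lam mu) M * esym l (Lam lam) M"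
    using mono unfolding eq by simp
  then show ?thesis unfolding M_def .
qed

lemma Lam_scale: "Lam (\<lambda>i. t * mu i) = (\<lambda>S. t * Lam mu S)"
  unfolding Lam_def by (simp add: sum_distrib_left)

definition qf :: "real^'n^'n \<Rightarrow> real \<Rightarrow> real^'n \<Rightarrow> real^'n \<Rightarrow> real" where
  "qf H c v w = v \<bullet> (H *v w) + c * (v \<bullet> w)"

lemma Hv_sum:
  fixes H :: "real^'n^'m"
  shows "finite K \<Longrightarrow> H *v (\<Sum>i\<in>K. a i *\<^sub>R e i) = (\<Sum>i\<in>K. a i *\<^sub>R (H *v e i))"
proof (induction K rule: finite_induct)
  case empty
  then show ?case by (simp add: matrix_vector_mult_0_right)
next
  case (insert x F)
  then show ?case by (simp add: matrix_vector_right_distrib matrix_vector_mult_scaleR)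
qed

lemma qf_sum_left: "finite K \<Longrightarrow> qf H c (\<Sum>i\<in>K. a i *\<^sub>R e i) w = (\<Sum>i\<in>K. a i * qf H c (e i) w)"
  unfolding qf_def by (simp add: inner_sum_left sum.distrib sum_distrib_left algebra_simps)

lemma qf_sum_right: "finite K \<Longrightarrow> qf H c v (\<Sum>j\<in>K. b j *\<^sub>R e j) = (\<Sum>j\<in>K. b j * qf H c v (e j))"
  unfolding qf_def by (simp add: Hv_sum inner_sum_right sum.distrib sum_distrib_left algebra_simps)

lemma qf_inner: "qf 0 1 v w = v \<bullet> w"
  unfolding qf_def by (simp add: matrix_vector_mult_0)

lemma qf_diag:
  assumes fin: "finite K" and K: "K \<subseteq> L"
    and d: "\<forall>i\<in>L. \<forall>j\<in>L. qf H c (e i) (e j) = (if i = j then lam i else 0)"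
  shows "qf H c (\<Sum>i\<in>K. a i *\<^sub>R e i) (\<Sum>j\<in>K. a j *\<^sub>R e j) = (\<Sum>i\<in>K. (a i)^2 * lam i)"
proof -
  have dK: "\<And>i j. i \<in> K \<Longrightarrow> j \<in> K \<Longrightarrow> qf H c (e i) (e j) = (if i = j then lam i else 0)"
    using d K by blast
  have "qf H c (\<Sum>i\<in>K. a i *\<^sub>R e i) (\<Sum>j\<in>K. a j *\<^sub>R e j)
      = (\<Sum>j\<in>K. a j * (\<Sum>i\<in>K. a i * qf H c (e i) (e j)))"
    unfolding qf_sum_left[OF fin] qf_sum_right[OF fin] ..
  also have "\<dots> = (\<Sum>j\<in>K. a j * (a j * lam j))"
  proof (rule sum.cong[OF refl])
    fix j assume j: "j \<in> K"
    have "(\<Sum>i\<in>K. a i * qf H c (e i) (e j)) = (\<Sum>i\<in>K. if i = j then a i * lam i else 0)"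
    proof (rule sum.cong[OF refl])
      fix i assume i: "i \<in> K"
      show "a i * qf H c (e i) (e j) = (if i = j then a i * lam i else 0)" using dK[OF i j] by simp
    qed
    also have "\<dots> = a j * lam j" using fin j by (simp add: sum.delta)
    finally show "a j * (\<Sum>i\<in>K. a i * qf H c (e i) (e j)) = a j * (a j * lam j)" by simp
  qed
  also have "\<dots> = (\<Sum>i\<in>K. (a i)^2 * lam i)" by (simp add: power2_eq_square algebra_simps)
  finally show ?thesis .
qed

lemma frame_inner_diag:
  fixes x :: "real^'m" and e :: "nat \<Rightarrow> real^'m"
  assumes "tangent_frame x e"
  shows "\<forall>i\<in>{1..CARD('m) - 1}. \<forall>j\<in>{1..CARD('m) - 1}.
     qf 0 1 (e i) (e j) = (if i = j then (1::real) else 0)"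
  using assms unfolding tangent_frame_def qf_inner by auto

lemma span_frame_repr:
  fixes e :: "nat \<Rightarrow> real^'m"
  assumes fin: "finite K" and inj: "inj_on e K" and w: "w \<in> span (e ` K)"
  shows "\<exists>a. w = (\<Sum>i\<in>K. a i *\<^sub>R e i)"
proof -
  have "w \<in> range (\<lambda>u. \<Sum>v\<in>e ` K. u v *\<^sub>R v)" using w span_finite[of "e ` K"] fin by simp
  then obtain u where u: "w = (\<Sum>v\<in>e ` K. u v *\<^sub>R v)" by auto
  also have "\<dots> = (\<Sum>i\<in>K. u (e i) *\<^sub>R e i)"
    by (rule sum.reindex[OF inj, unfolded comp_def])
  finally show ?thesis by (rule exI[of _ "\<lambda>i. u (e i)"])
qed

lemma frame_inj:
  assumes "\<forall>i\<in>L. \<forall>j\<in>L. e i \<bullet> e j = (if i = j then (1::real) else 0)"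
  shows "inj_on e L"
proof (rule inj_onI)
  fix i j assume ij: "i \<in> L" "j \<in> L" "e i = e j"
  have "e i \<bullet> e j = e i \<bullet> e i" using ij(3) by simp
  also have "\<dots> = 1" using assms ij(1) by auto
  finally have "e i \<bullet> e j = 1" .
  then show "i = j" using assms ij(1,2) by (auto split: if_splits)
qed

lemma frame_indep:
  fixes e :: "nat \<Rightarrow> real^'m"
  assumes o: "\<forall>i\<in>L. \<forall>j\<in>L. e i \<bullet> e j = (if i = j then (1::real) else 0)"
  shows "independent (e ` L)"
proof (rule pairwise_orthogonal_independent)
  show "pairwise orthogonal (e ` L)"
    unfolding pairwise_def orthogonal_def using o by auto
  show "0 \<notin> e ` L"
  proof
    assume "0 \<in> e ` L"
    then obtain i where "i \<in> L" "e i = 0" by auto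
    then show False using o by force
  qed
qed

lemma frame_x_indep:
  fixes e :: "nat \<Rightarrow> real^'m"
  assumes o: "\<forall>i\<in>L. \<forall>j\<in>L. e i \<bullet> e j = (if i = j then (1::real) else 0)"
    and ox: "\<forall>i\<in>L. e i \<bullet> x = 0" and xx: "x \<bullet> x = 1"
  shows "independent (insert x (e ` L))"
proof (rule pairwise_orthogonal_independent)
  show "pairwise orthogonal (insert x (e ` L))"
    unfolding pairwise_def orthogonal_def using o ox by (auto simp: inner_commute)
  show "0 \<notin> insert x (e ` L)"
  proof
    assume "0 \<in> insert x (e ` L)"
    then have "x = 0 \<or> (\<exists>i\<in>L. e i = 0)" by auto
    then show False using o xx by force
  qed
qed

lemma eig_count:
  fixes x :: "real^'m" and e f :: "nat \<Rightarrow> real^'m" and H1 H2 :: "real^'m^'m"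
  assumes xx: "x \<bullet> x = 1" and te: "tangent_frame x e" and tf: "tangent_frame x f"
    and dA: "\<forall>i\<in>{1..CARD('m) - 1}. \<forall>j\<in>{1..CARD('m) - 1}. qf H1 c1 (e i) (e j) = (if i = j then lam i else 0)"
    and dB: "\<forall>i\<in>{1..CARD('m) - 1}. \<forall>j\<in>{1..CARD('m) - 1}. qf H2 c2 (f i) (f j) = (if i = j then mu i else 0)"
    and le: "\<And>w. w \<bullet> x = 0 \<Longrightarrow> qf H1 c1 w w \<le> qf H2 c2 w w"
  shows "card {i\<in>{1..CARD('m) - 1}. lam i \<ge> c} \<le> card {j\<in>{1..CARD('m) - 1}. mu j \<ge> c}"
proof (rule ccontr)
  define n where "n = CARD('m) - 1"
  have Cn: "CARD('m) = n + 1" unfolding n_def by simp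
  define Ia where "Ia = {i\<in>{1..n}. lam i \<ge> c}"
  define Jb where "Jb = {j\<in>{1..n}. mu j \<ge> c}"
  define Jc where "Jc = {j\<in>{1..n}. mu j < c}"
  assume "\<not> ?thesis"
  then have ba: "card Jb < card Ia" unfolding Ia_def Jb_def n_def by simp
  have eo: "\<forall>i\<in>{1..n}. e i \<bullet> x = 0" and ee: "\<forall>i\<in>{1..n}. \<forall>j\<in>{1..n}. e i \<bullet> e j = (if i = j then 1 else 0)"
    using te unfolding tangent_frame_def n_def by auto
  have fo: "\<forall>i\<in>{1..n}. f i \<bullet> x = 0" and ff: "\<forall>i\<in>{1..n}. \<forall>j\<in>{1..n}. f i \<bullet> f j = (if i = j then 1 else 0)"
    using tf unfolding tangent_frame_def n_def by auto
  have IaS: "Ia \<subseteq> {1..n}" and JcS: "Jc \<subseteq> {1..n}" unfolding Ia_def Jc_def by auto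
  have finIa: "finite Ia" and finJc: "finite Jc" unfolding Ia_def Jc_def by auto
  have eeIa: "\<forall>i\<in>Ia. \<forall>j\<in>Ia. e i \<bullet> e j = (if i = j then 1 else 0)" using ee IaS by blast
  have ffJc: "\<forall>i\<in>Jc. \<forall>j\<in>Jc. f i \<bullet> f j = (if i = j then 1 else 0)" using ff JcS by blast
  have injIa: "inj_on e Ia" by (rule frame_inj[OF eeIa])
  have injJc: "inj_on f Jc" by (rule frame_inj[OF ffJc])
  have xnot: "x \<notin> e ` Ia"
  proof
    assume "x \<in> e ` Ia"
    then obtain i where "i \<in> Ia" "x = e i" by auto
    then show False using eo IaS xx by auto
  qed
  define X where "X = insert x (e ` Ia)"
  define Y where "Y = f ` Jc"
  have indX: "independent X" unfolding X_def
    by (rule frame_x_indep[OF eeIa]) (use eo IaS xx in auto)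
  have indY: "independent Y" unfolding Y_def by (rule frame_indep[OF ffJc])
  have cX: "card X = Suc (card Ia)" unfolding X_def using xnot finIa card_image[OF injIa] by simp
  have cJc: "card Jc = n - card Jb"
  proof -
    have "Jc = {1..n} - Jb" unfolding Jc_def Jb_def by auto
    moreover have "Jb \<subseteq> {1..n}" unfolding Jb_def by auto
    ultimately show ?thesis by (simp add: card_Diff_subset finite_subset)
  qed
  have cY: "card Y = n - card Jb" unfolding Y_def using card_image[OF injJc] cJc by simp
  define S where "S = span X"
  define T where "T = span Y"
  have dS: "dim S = Suc (card Ia)" unfolding S_def using dim_span_eq_card_independent[OF indX] cX by simp
  have dT: "dim T = n - card Jb" unfolding T_def using dim_span_eq_card_independent[OF indY] cY by simp
  have sums: "dim {a + b |a b. a \<in> S \<and> b \<in> T} + dim (S \<inter> T) = dim S + dim T"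
    by (rule dim_sums_Int) (simp_all add: S_def T_def subspace_span)
  have "dim {a + b |a b. a \<in> S \<and> b \<in> T} \<le> CARD('m)" by (rule dim_subset_UNIV_cart)
  moreover have "card Ia \<le> n" using IaS by (metis card_atLeastAtMost card_mono diff_Suc_1 finite_atLeastAtMost)
  ultimately have "dim (S \<inter> T) > 0" using sums dS dT ba Cn by linarith
  then have "\<not> (S \<inter> T \<subseteq> {0})" using dim_eq_0[of "S \<inter> T"] by linarith
  then obtain w where wS: "w \<in> S" and wT: "w \<in> T" and w0: "w \<noteq> 0" by auto
  obtain b where wb: "w = (\<Sum>j\<in>Jc. b j *\<^sub>R f j)"
    using span_frame_repr[OF finJc injJc] wT unfolding T_def Y_def by blast
  have wx: "w \<bullet> x = 0"
    unfolding wb inner_sum_left using fo JcS by (auto intro!: sum.neutral)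
  obtain k where k: "w - k *\<^sub>R x \<in> span (e ` Ia)"
    using wS unfolding S_def X_def span_insert by auto
  obtain a where wa0: "w - k *\<^sub>R x = (\<Sum>i\<in>Ia. a i *\<^sub>R e i)"
    using span_frame_repr[OF finIa injIa k] by blast
  have "(w - k *\<^sub>R x) \<bullet> x = 0"
    unfolding wa0 inner_sum_left using eo IaS by (auto intro!: sum.neutral)
  then have "k = 0" using wx xx by (simp add: inner_diff_left)
  then have wa: "w = (\<Sum>i\<in>Ia. a i *\<^sub>R e i)" using wa0 by simp
  have dA': "\<forall>i\<in>{1..n}. \<forall>j\<in>{1..n}. qf H1 c1 (e i) (e j) = (if i = j then lam i else 0)"
    using dA unfolding n_def .
  have dB': "\<forall>i\<in>{1..n}. \<forall>j\<in>{1..n}. qf H2 c2 (f i) (f j) = (if i = j then mu i else 0)"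
    using dB unfolding n_def .
  have dIe: "\<forall>i\<in>{1..n}. \<forall>j\<in>{1..n}. qf 0 1 (e i) (e j) = (if i = j then (1::real) else 0)"
    using frame_inner_diag[OF te] unfolding n_def .
  have dIf: "\<forall>i\<in>{1..n}. \<forall>j\<in>{1..n}. qf 0 1 (f i) (f j) = (if i = j then (1::real) else 0)"
    using frame_inner_diag[OF tf] unfolding n_def .
  have Aw: "qf H1 c1 w w = (\<Sum>i\<in>Ia. (a i)^2 * lam i)"
    unfolding wa by (rule qf_diag[OF finIa IaS dA'])
  have ww1: "w \<bullet> w = (\<Sum>i\<in>Ia. (a i)^2 * 1)"
    unfolding qf_inner[symmetric] wa by (rule qf_diag[OF finIa IaS dIe])
  have Bw: "qf H2 c2 w w = (\<Sum>j\<in>Jc. (b j)^2 * mu j)"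
    unfolding wb by (rule qf_diag[OF finJc JcS dB'])
  have ww2: "w \<bullet> w = (\<Sum>j\<in>Jc. (b j)^2 * 1)"
    unfolding qf_inner[symmetric] wb by (rule qf_diag[OF finJc JcS dIf])
  have "c * (w \<bullet> w) = (\<Sum>i\<in>Ia. (a i)^2 * c)" unfolding ww1 by (simp add: sum_distrib_left mult.commute)
  also have "\<dots> \<le> (\<Sum>i\<in>Ia. (a i)^2 * lam i)"
    by (rule sum_mono, rule mult_left_mono) (auto simp: Ia_def)
  finally have A_ge: "c * (w \<bullet> w) \<le> qf H1 c1 w w" using Aw by simp
  have wpos: "w \<bullet> w > 0" using w0 by simp
  have "\<exists>j0\<in>Jc. b j0 \<noteq> 0"
  proof (rule ccontr)
    assume "\<not> (\<exists>j0\<in>Jc. b j0 \<noteq> 0)"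
    then have "w \<bullet> w = 0" unfolding ww2 by simp
    then show False using wpos by simp
  qed
  then obtain j0 where j0: "j0 \<in> Jc" "b j0 \<noteq> 0" by blast
  have "qf H2 c2 w w = (\<Sum>j\<in>Jc. (b j)^2 * mu j)" by (rule Bw)
  also have "\<dots> < (\<Sum>j\<in>Jc. (b j)^2 * c)"
  proof (rule sum_strict_mono_ex1[OF finJc])
    show "\<forall>j\<in>Jc. (b j)^2 * mu j \<le> (b j)^2 * c"
      by (auto intro!: mult_left_mono simp: Jc_def less_imp_le)
    have "(b j0)^2 > 0" using j0(2) by simp
    moreover have "mu j0 < c" using j0(1) unfolding Jc_def by simp
    ultimately have "(b j0)^2 * mu j0 < (b j0)^2 * c" by simp
    then show "\<exists>j\<in>Jc. (b j)^2 * mu j < (b j)^2 * c" using j0(1) by blast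
  qed
  also have "\<dots> = c * (w \<bullet> w)" unfolding ww2 by (simp add: sum_distrib_left mult.commute)
  finally have B_lt: "qf H2 c2 w w < c * (w \<bullet> w)" .
  have "qf H1 c1 w w \<le> qf H2 c2 w w" by (rule le[OF wx])
  then show False using A_ge B_lt by simp
qed

lemma quad_nonpos_zero:
  fixes a b :: real
  assumes "\<And>s. a * s + b * s^2 \<le> 0"
  shows "a = 0"
proof -
  define t where "t = 1 / (\<bar>b\<bar> + 1)"
  have tpos: "t > 0" unfolding t_def by simp
  have "\<bar>b * t\<bar> < 1" unfolding t_def by (simp add: abs_mult field_simps)
  then have bt: "1 + b * t > 0" by linarith
  have "a * (a * t) + b * (a * t)^2 \<le> 0" by (rule assms)
  moreover have "a * (a * t) + b * (a * t)^2 = a^2 * (t * (1 + b * t))"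
    by (simp add: power2_eq_square algebra_simps)
  ultimately have "a^2 * (t * (1 + b * t)) \<le> 0" by simp
  moreover have "a^2 * (t * (1 + b * t)) \<ge> 0" using tpos bt by simp
  ultimately have "a^2 * (t * (1 + b * t)) = 0" by linarith
  then have "a^2 = 0" using tpos bt by simp
  then show ?thesis by simp
qed

lemma qf_sym:
  assumes symH: "\<And>v w. v \<bullet> (H *v w) = w \<bullet> (H *v v)"
  shows "qf H c v w = qf H c w v"
  unfolding qf_def using symH[of v w] by (simp add: inner_commute)

lemma qf_expand:
  fixes H :: "real^'m^'m"
  assumes symH: "\<And>v w. v \<bullet> (H *v w) = w \<bullet> (H *v v)"
  shows "qf H c (v + s *\<^sub>R z) (v + s *\<^sub>R z) = qf H c v v + 2 * s * qf H c v z + s^2 * qf H c z z"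
proof -
  have "z \<bullet> (H *v v) = v \<bullet> (H *v z)" using symH[of z v] .
  moreover have "z \<bullet> v = v \<bullet> z" by (rule inner_commute)
  ultimately show ?thesis unfolding qf_def
    by (simp add: matrix_vector_right_distrib matrix_vector_mult_scaleR inner_add_left inner_add_right
        power2_eq_square algebra_simps)
qed

lemma qf_scale: "qf H c (r *\<^sub>R v) (r *\<^sub>R v) = r^2 * qf (H::real^'m^'m) c v v"
  unfolding qf_def by (simp add: matrix_vector_mult_scaleR power2_eq_square algebra_simps)

lemma dim_orth_complement:
  fixes W :: "(real^'m) set"
  assumes W: "subspace W" and w1: "w1 \<in> W" and n1: "w1 \<bullet> w1 = 1"
  shows "dim {z \<in> W. z \<bullet> w1 = 0} + 1 = dim W"
proof -
  define W' where "W' = {z \<in> W. z \<bullet> w1 = 0}"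
  define T where "T = span {w1}"
  have sW': "subspace W'" unfolding W'_def
    using W unfolding subspace_def by (auto simp: inner_add_left)
  have sT: "subspace T" unfolding T_def by (rule subspace_span)
  have sums: "dim {a + b |a b. a \<in> W' \<and> b \<in> T} + dim (W' \<inter> T) = dim W' + dim T"
    by (rule dim_sums_Int[OF sW' sT])
  have Tdesc: "T = range (\<lambda>k. k *\<^sub>R w1)" unfolding T_def by (rule span_singleton)
  have eq: "{a + b |a b. a \<in> W' \<and> b \<in> T} = W"
  proof (rule set_eqI, rule iffI)
    fix v assume "v \<in> {a + b |a b. a \<in> W' \<and> b \<in> T}"
    then obtain a b where ab: "v = a + b" "a \<in> W'" "b \<in> T" by auto
    then obtain k where "b = k *\<^sub>R w1" using Tdesc by auto
    then have "b \<in> W" using w1 W by (simp add: subspace_scale)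
    moreover have "a \<in> W" using ab(2) unfolding W'_def by simp
    ultimately show "v \<in> W" using ab(1) W by (simp add: subspace_add)
  next
    fix v assume v: "v \<in> W"
    define a where "a = v - (v \<bullet> w1) *\<^sub>R w1"
    have "a \<in> W" unfolding a_def using v w1 W by (simp add: subspace_diff subspace_scale)
    moreover have "a \<bullet> w1 = 0" unfolding a_def using n1 by (simp add: inner_diff_left)
    ultimately have "a \<in> W'" unfolding W'_def by simp
    moreover have "(v \<bullet> w1) *\<^sub>R w1 \<in> T" using Tdesc by auto
    moreover have "v = a + (v \<bullet> w1) *\<^sub>R w1" unfolding a_def by simp
    ultimately show "v \<in> {a + b |a b. a \<in> W' \<and> b \<in> T}" by blast
  qed
  have int0: "W' \<inter> T \<subseteq> {0}"
  proof
    fix v assume "v \<in> W' \<inter> T"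
    then obtain k where k: "v = k *\<^sub>R w1" "v \<bullet> w1 = 0" using Tdesc unfolding W'_def by auto
    then have "k = 0" using n1 by simp
    then show "v \<in> {0}" using k by simp
  qed
  have d0: "dim (W' \<inter> T) = 0" using int0 by simp
  have dT: "dim T = 1"
  proof -
    have "w1 \<noteq> 0" using n1 by auto
    then have "independent {w1}" by (simp add: independent_insert)
    then show ?thesis unfolding T_def using dim_span_eq_card_independent by fastforce
  qed
  have "dim W = dim W' + 1" using sums[unfolded eq] d0 dT by linarith
  then show ?thesis unfolding W'_def by simp
qed

lemma spectral_subspace:
  fixes H :: "real^'m^'m"
  assumes symH: "\<And>v w. v \<bullet> (H *v w) = w \<bullet> (H *v v)"
  shows "subspace W \<Longrightarrow> dim W = d \<Longrightarrow> \<exists>e. (\<forall>i\<in>{1..d}. e i \<in> W) \<and>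
     (\<forall>i\<in>{1..d}. \<forall>j\<in>{1..d}. e i \<bullet> e j = (if i = j then 1 else 0)) \<and>
     (\<forall>i\<in>{1..d}. \<forall>j\<in>{1..d}. i \<noteq> j \<longrightarrow> qf H c (e i) (e j) = 0)"
proof (induction d arbitrary: W)
  case 0
  then show ?case by simp
next
  case (Suc d)
  define K where "K = W \<inter> sphere 0 1"
  have clW: "closed W" by (rule closed_subspace[OF Suc.prems(1)])
  have cK: "compact K" unfolding K_def using clW by (simp add: closed_Int_compact)
  have "\<not> W \<subseteq> {0}" using Suc.prems(2) dim_eq_0[of W] by auto
  then obtain w where w: "w \<in> W" "w \<noteq> 0" by auto
  have "(1 / norm w) *\<^sub>R w \<in> K" unfolding K_def using w Suc.prems(1) by (simp add: subspace_scale)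
  then have Kne: "K \<noteq> {}" by auto
  have contq: "continuous_on K (\<lambda>v. qf H c v v)" unfolding qf_def by (intro continuous_intros)
  obtain w1 where w1: "w1 \<in> K" and w1max: "\<And>v. v \<in> K \<Longrightarrow> qf H c v v \<le> qf H c w1 w1"
    using continuous_attains_sup[OF cK Kne contq] by blast
  have w1W: "w1 \<in> W" and nw1: "norm w1 = 1" using w1 unfolding K_def by auto
  have n1: "w1 \<bullet> w1 = 1" using nw1 by (simp add: norm_eq_1)
  define Mx where "Mx = qf H c w1 w1"
  have crit: "qf H c w1 z = 0" if zW: "z \<in> W" and zo: "z \<bullet> w1 = 0" for z
  proof -
    have "2 * qf H c w1 z * s + (qf H c z z - Mx * (z \<bullet> z)) * s^2 \<le> 0" for s
    proof -
      define v where "v = w1 + s *\<^sub>R z"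
      have vW: "v \<in> W" unfolding v_def using w1W zW Suc.prems(1) by (simp add: subspace_add subspace_scale)
      have vv: "v \<bullet> v = 1 + s^2 * (z \<bullet> z)"
        unfolding v_def using n1 zo by (simp add: inner_add_left inner_add_right inner_commute power2_eq_square algebra_simps)
      then have vpos: "v \<bullet> v > 0" by (simp add: add_pos_nonneg)
      have nv: "norm v = sqrt (v \<bullet> v)" by (simp add: norm_eq_sqrt_inner)
      define u where "u = (1 / norm v) *\<^sub>R v"
      have "norm v > 0" using vpos nv by simp
      then have uK: "u \<in> K" unfolding K_def u_def using vW Suc.prems(1) by (simp add: subspace_scale)
      have "qf H c u u = (1 / norm v)^2 * qf H c v v" unfolding u_def by (rule qf_scale)
      also have "(1 / norm v)^2 = 1 / (v \<bullet> v)" using vpos by (simp add: nv power_divide)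
      finally have "qf H c v v / (v \<bullet> v) \<le> Mx" using w1max[OF uK] unfolding Mx_def by simp
      then have "qf H c v v \<le> Mx * (v \<bullet> v)" using vpos by (simp add: divide_le_eq)
      moreover have "qf H c v v = Mx + 2 * s * qf H c w1 z + s^2 * qf H c z z"
        unfolding v_def Mx_def by (rule qf_expand[OF symH])
      ultimately show ?thesis unfolding vv by (simp add: algebra_simps)
    qed
    then have "2 * qf H c w1 z = 0" by (intro quad_nonpos_zero) 
    then show ?thesis by simp
  qed
  define W' where "W' = {z \<in> W. z \<bullet> w1 = 0}"
  have sW': "subspace W'" unfolding W'_def
    using Suc.prems(1) unfolding subspace_def by (auto simp: inner_add_left)
  have dW': "dim W' = d" using dim_orth_complement[OF Suc.prems(1) w1W n1] Suc.prems(2) unfolding W'_def by simp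
  obtain e' where e'W: "\<forall>i\<in>{1..d}. e' i \<in> W'"
    and e'o: "\<forall>i\<in>{1..d}. \<forall>j\<in>{1..d}. e' i \<bullet> e' j = (if i = j then 1 else 0)"
    and e'q: "\<forall>i\<in>{1..d}. \<forall>j\<in>{1..d}. i \<noteq> j \<longrightarrow> qf H c (e' i) (e' j) = 0"
    using Suc.IH[OF sW' dW'] by blast
  define e where "e = (\<lambda>i. if i = Suc d then w1 else e' i)"
  have eW: "\<forall>i\<in>{1..Suc d}. e i \<in> W" unfolding e_def using e'W w1W unfolding W'_def by auto
  have orth: "e' i \<bullet> w1 = 0" if "i \<in> {1..d}" for i using e'W that unfolding W'_def by auto
  have qorth: "qf H c (e' i) w1 = 0" "qf H c w1 (e' i) = 0" if "i \<in> {1..d}" for i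
  proof -
    have "e' i \<in> W" using e'W that unfolding W'_def by auto
    then have "qf H c w1 (e' i) = 0" using crit orth[OF that] by simp
    then show "qf H c w1 (e' i) = 0" "qf H c (e' i) w1 = 0" using qf_sym[OF symH] by metis+
  qed
  have eo: "\<forall>i\<in>{1..Suc d}. \<forall>j\<in>{1..Suc d}. e i \<bullet> e j = (if i = j then 1 else 0)"
  proof (intro ballI)
    fix i j assume i: "i \<in> {1..Suc d}" and j: "j \<in> {1..Suc d}"
    show "e i \<bullet> e j = (if i = j then 1 else 0)"
    proof (cases "i = Suc d"; cases "j = Suc d")
      assume "i = Suc d" "j = Suc d" then show ?thesis unfolding e_def using n1 by simp
    next
      assume a: "i = Suc d" "j \<noteq> Suc d"
      then have "j \<in> {1..d}" using j by auto
      then show ?thesis unfolding e_def using a orth by (simp add: inner_commute)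
    next
      assume a: "i \<noteq> Suc d" "j = Suc d"
      then have "i \<in> {1..d}" using i by auto
      then show ?thesis unfolding e_def using a orth by simp
    next
      assume a: "i \<noteq> Suc d" "j \<noteq> Suc d"
      then have "i \<in> {1..d}" "j \<in> {1..d}" using i j by auto
      then show ?thesis unfolding e_def using a e'o by simp
    qed
  qed
  have eq: "\<forall>i\<in>{1..Suc d}. \<forall>j\<in>{1..Suc d}. i \<noteq> j \<longrightarrow> qf H c (e i) (e j) = 0"
  proof (intro ballI impI)
    fix i j assume i: "i \<in> {1..Suc d}" and j: "j \<in> {1..Suc d}" and ij: "i \<noteq> j"
    show "qf H c (e i) (e j) = 0"
    proof (cases "i = Suc d")
      case True
      then have "j \<in> {1..d}" using j ij by auto
      then show ?thesis unfolding e_def using True ij qorth by simp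
    next
      case False
      then have i': "i \<in> {1..d}" using i by auto
      show ?thesis
      proof (cases "j = Suc d")
        case True then show ?thesis unfolding e_def using False i' qorth by simp
      next
        case False
        then have "j \<in> {1..d}" using j by auto
        then show ?thesis unfolding e_def using False \<open>i \<noteq> Suc d\<close> i' ij e'q by simp
      qed
    qed
  qed
  show ?case using eW eo eq by blast
qed

lemma frame_exists:
  fixes x :: "real^'m" and H :: "real^'m^'m"
  assumes xx: "x \<bullet> x = 1" and symH: "\<And>v w. v \<bullet> (H *v w) = w \<bullet> (H *v v)"
  shows "\<exists>lam e. tangent_frame x e \<and>
     (\<forall>i\<in>{1..CARD('m) - 1}. \<forall>j\<in>{1..CARD('m) - 1}. qf H c (e i) (e j) = (if i = j then lam i else 0))"
proof -
  define W where "W = {z. z \<bullet> x = (0::real)}"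
  have sW: "subspace W" unfolding W_def by (rule subspace_hyperplane2)
  have dU: "dim (UNIV :: (real^'m) set) = CARD('m)" using vec_dim_card dim_vec_eq by metis
  have "dim {z \<in> (UNIV :: (real^'m) set). z \<bullet> x = 0} + 1 = dim (UNIV :: (real^'m) set)"
    by (rule dim_orth_complement[OF subspace_UNIV _ xx]) simp
  then have dW: "dim W = CARD('m) - 1" unfolding W_def dU by simp
  obtain e where eW: "\<forall>i\<in>{1..CARD('m) - 1}. e i \<in> W"
    and eo: "\<forall>i\<in>{1..CARD('m) - 1}. \<forall>j\<in>{1..CARD('m) - 1}. e i \<bullet> e j = (if i = j then 1 else 0)"
    and eq: "\<forall>i\<in>{1..CARD('m) - 1}. \<forall>j\<in>{1..CARD('m) - 1}. i \<noteq> j \<longrightarrow> qf H c (e i) (e j) = 0"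
    using spectral_subspace[OF symH sW dW] by blast
  have tf: "tangent_frame x e" unfolding tangent_frame_def using eW eo unfolding W_def by auto
  have "\<forall>i\<in>{1..CARD('m) - 1}. \<forall>j\<in>{1..CARD('m) - 1}.
      qf H c (e i) (e j) = (if i = j then qf H c (e i) (e i) else 0)"
    using eq by auto
  then show ?thesis using tf by (intro exI[of _ "\<lambda>i. qf H c (e i) (e i)"] exI[of _ e]) simp
qed

lemma linear_axis_expand:
  fixes L :: "real^'m \<Rightarrow> 'b::real_vector"
  assumes lin: "linear L"
  shows "L h = (\<Sum>i\<in>UNIV. h $ i *\<^sub>R L (axis i 1))"
proof -
  have "h = (\<Sum>i\<in>UNIV. h $ i *\<^sub>R axis i 1)"
    using basis_expansion[of h] by (simp add: scalar_mult_eq_scaleR)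
  then have "L h = L (\<Sum>i\<in>UNIV. h $ i *\<^sub>R axis i 1)" by simp
  also have "\<dots> = (\<Sum>i\<in>UNIV. L (h $ i *\<^sub>R axis i 1))" by (rule linear_sum[OF lin])
  also have "\<dots> = (\<Sum>i\<in>UNIV. h $ i *\<^sub>R L (axis i 1))" by (simp add: linear_scale[OF lin])
  finally show ?thesis .
qed

lemma grad_has_derivative:
  fixes u :: "real^'m \<Rightarrow> real"
  assumes "sph_ext u differentiable (at y)"
  shows "(sph_ext u has_derivative (\<lambda>h. ext_grad u y \<bullet> h)) (at y)"
proof -
  let ?L = "frechet_derivative (sph_ext u) (at y)"
  have d: "(sph_ext u has_derivative ?L) (at y)" using assms frechet_derivative_works by blast
  have lin: "linear ?L" by (rule linear_frechet_derivative[OF assms])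
  have "?L h = ext_grad u y \<bullet> h" for h
  proof -
    have "?L h = (\<Sum>i\<in>UNIV. h $ i * ?L (axis i 1))" using linear_axis_expand[OF lin, of h] by simp
    also have "\<dots> = ext_grad u y \<bullet> h" unfolding ext_grad_def inner_vec_def by (simp add: mult.commute)
    finally show ?thesis .
  qed
  then have "?L = (\<lambda>h. ext_grad u y \<bullet> h)" by (rule ext)
  then show ?thesis using d by simp
qed

lemma hess_has_derivative:
  fixes u :: "real^'m \<Rightarrow> real"
  assumes "ext_grad u differentiable (at y)"
  shows "(ext_grad u has_derivative (\<lambda>h. ext_hess u y *v h)) (at y)"
proof -
  let ?L = "frechet_derivative (ext_grad u) (at y)"
  have d: "(ext_grad u has_derivative ?L) (at y)" using assms frechet_derivative_works by blast
  have lin: "linear ?L" by (rule linear_frechet_derivative[OF assms])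
  have "?L h = ext_hess u y *v h" for h
  proof -
    have "?L h = (\<Sum>j\<in>UNIV. h $ j *\<^sub>R ?L (axis j 1))" by (rule linear_axis_expand[OF lin])
    also have "\<dots> = ext_hess u y *v h"
      unfolding ext_hess_def matrix_vector_mult_def
      by (simp add: vec_eq_iff sum_component mult.commute)
    finally show ?thesis .
  qed
  then have "?L = (\<lambda>h. ext_hess u y *v h)" by (rule ext)
  then show ?thesis using d by simp
qed

lemma deriv_line:
  fixes U :: "real^'m \<Rightarrow> real"
  assumes "(U has_derivative (\<lambda>h. G \<bullet> h)) (at (p + t *\<^sub>R w))"
  shows "((\<lambda>s. U (p + s *\<^sub>R w)) has_real_derivative (G \<bullet> w)) (at t)"
proof -
  have l: "((\<lambda>s. p + s *\<^sub>R w) has_derivative (\<lambda>s. s *\<^sub>R w)) (at t)"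
    by (intro derivative_eq_intros) auto
  have "((\<lambda>s. U (p + s *\<^sub>R w)) has_derivative ((\<lambda>h. G \<bullet> h) \<circ> (\<lambda>s. s *\<^sub>R w))) (at t)"
    using diff_chain_at[OF l assms] by (simp add: comp_def)
  moreover have "((\<lambda>h. G \<bullet> h) \<circ> (\<lambda>s. s *\<^sub>R w)) = (*) (G \<bullet> w)"
    by (rule ext) (simp add: mult.commute)
  ultimately show ?thesis unfolding has_field_derivative_def by simp
qed

lemma schwarz_limit:
  fixes U :: "real^'m \<Rightarrow> real" and G :: "real^'m \<Rightarrow> real^'m" and H :: "real^'m^'m"
  assumes S: "open S" "a \<in> S"
    and dU: "\<And>y. y \<in> S \<Longrightarrow> (U has_derivative (\<lambda>h. G y \<bullet> h)) (at y)"
    and dG: "(G has_derivative (\<lambda>h. H *v h)) (at a)"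
  shows "((\<lambda>s. (U (a + s *\<^sub>R v + s *\<^sub>R w) - U (a + s *\<^sub>R v) - U (a + s *\<^sub>R w) + U a) / s^2)
           \<longlongrightarrow> w \<bullet> (H *v v)) (at 0)"
  unfolding LIM_eq
proof (intro allI impI)
  fix r :: real assume r: "r > 0"
  define Cv where "Cv = norm v"
  define Cw where "Cw = norm w"
  define K where "K = (Cv + 2 * Cw) * Cw + 1"
  have Kpos: "K > 0" unfolding K_def Cv_def Cw_def by (simp add: add_nonneg_pos)
  define eps where "eps = r / (2 * K)"
  have eps: "eps > 0" unfolding eps_def using r Kpos by simp
  obtain d where d: "d > 0" and dd: "\<And>y. norm (y - a) < d \<Longrightarrow> norm (G y - G a - H *v (y - a)) \<le> eps * norm (y - a)"
    using dG eps unfolding has_derivative_at_alt by blast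
  obtain d1 where d1: "d1 > 0" "ball a d1 \<subseteq> S" using S open_contains_ball by blast
  define d2 where "d2 = min d d1"
  have d2: "d2 > 0" unfolding d2_def using d d1 by simp
  define del where "del = d2 / (Cv + Cw + 1)"
  have CvCw: "Cv \<ge> 0" "Cw \<ge> 0" unfolding Cv_def Cw_def by auto
  have del: "del > 0" unfolding del_def using d2 CvCw by simp
  show "\<exists>del>0. \<forall>s. s \<noteq> 0 \<and> norm (s - 0) < del \<longrightarrow>
      norm ((U (a + s *\<^sub>R v + s *\<^sub>R w) - U (a + s *\<^sub>R v) - U (a + s *\<^sub>R w) + U a) / s^2 - w \<bullet> (H *v v)) < r"
  proof (intro exI[of _ del] conjI allI impI)
    show "del > 0" by (rule del)
    fix s :: real assume sa: "s \<noteq> 0 \<and> norm (s - 0) < del"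
    then have s0: "s \<noteq> 0" and sdel: "\<bar>s\<bar> < del" by auto
    have sC: "\<bar>s\<bar> * (Cv + Cw + 1) < d2" using sdel CvCw unfolding del_def by (simp add: field_simps)
    have small: "norm (s *\<^sub>R v + t *\<^sub>R w) < d2" "norm (t *\<^sub>R w) < d2" if t: "\<bar>t\<bar> \<le> \<bar>s\<bar>" for t
    proof -
      have "norm (s *\<^sub>R v + t *\<^sub>R w) \<le> \<bar>s\<bar> * Cv + \<bar>t\<bar> * Cw"
        unfolding Cv_def Cw_def using norm_triangle_ineq[of "s *\<^sub>R v" "t *\<^sub>R w"] by simp
      also have "\<dots> \<le> \<bar>s\<bar> * Cv + \<bar>s\<bar> * Cw" using t CvCw by (simp add: mult_right_mono)
      also have "\<dots> < d2" using sC CvCw by (simp add: algebra_simps)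
      finally show "norm (s *\<^sub>R v + t *\<^sub>R w) < d2" .
      have "norm (t *\<^sub>R w) \<le> \<bar>s\<bar> * Cw" unfolding Cw_def using t by (simp add: mult_right_mono)
      also have "\<dots> < d2"
      proof -
        have e: "\<bar>s\<bar> * (Cv + Cw + 1) = \<bar>s\<bar> * Cw + (\<bar>s\<bar> * Cv + \<bar>s\<bar>)" by (simp add: algebra_simps)
        have "0 \<le> \<bar>s\<bar> * Cv" using CvCw by simp
        then show ?thesis using sC e by linarith
      qed
      finally show "norm (t *\<^sub>R w) < d2" .
    qed
    have inS: "a + y \<in> S" if "norm y < d2" for y
    proof -
      have "dist a (a + y) < d1" using that unfolding d2_def by (simp add: dist_norm)
      then show ?thesis using d1(2) by auto
    qed
    define phi where "phi = (\<lambda>t. U (a + s *\<^sub>R v + t *\<^sub>R w) - U (a + t *\<^sub>R w))"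
    define phi' where "phi' = (\<lambda>t. G (a + s *\<^sub>R v + t *\<^sub>R w) \<bullet> w - G (a + t *\<^sub>R w) \<bullet> w)"
    have dphi: "(phi has_real_derivative phi' t) (at t)" if t: "\<bar>t\<bar> \<le> \<bar>s\<bar>" for t
    proof -
      have p1: "a + s *\<^sub>R v + t *\<^sub>R w \<in> S" using inS[OF small(1)[OF t]] by (simp add: add.assoc)
      have p2: "a + t *\<^sub>R w \<in> S" using inS[OF small(2)[OF t]] .
      have "((\<lambda>t. U ((a + s *\<^sub>R v) + t *\<^sub>R w)) has_real_derivative G (a + s *\<^sub>R v + t *\<^sub>R w) \<bullet> w) (at t)"
        by (rule deriv_line) (use dU[OF p1] in simp)
      moreover have "((\<lambda>t. U (a + t *\<^sub>R w)) has_real_derivative G (a + t *\<^sub>R w) \<bullet> w) (at t)"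
        by (rule deriv_line) (use dU[OF p2] in simp)
      ultimately show ?thesis unfolding phi_def phi'_def by (intro derivative_intros)
    qed
    obtain xi where xi: "\<bar>xi\<bar> \<le> \<bar>s\<bar>" and mv: "phi s - phi 0 = s * phi' xi"
    proof (cases "s > 0")
      case True
      have "\<exists>z. 0 < z \<and> z < s \<and> phi s - phi 0 = (s - 0) * phi' z"
        by (rule MVT2[OF True]) (rule dphi, use True in auto)
      then show ?thesis using that by force
    next
      case False
      then have sn: "s < 0" using s0 by simp
      have "\<exists>z. s < z \<and> z < 0 \<and> phi 0 - phi s = (0 - s) * phi' z"
        by (rule MVT2[OF sn]) (rule dphi, use sn in auto)
      then obtain z where "s < z" "z < 0" "phi 0 - phi s = (0 - s) * phi' z" by blast
      moreover then have "\<bar>z\<bar> \<le> \<bar>s\<bar>" by simp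
      ultimately show ?thesis using that[of z] by (simp add: algebra_simps)
    qed
    define R1 where "R1 = G (a + s *\<^sub>R v + xi *\<^sub>R w) - G a - H *v (s *\<^sub>R v + xi *\<^sub>R w)"
    define R2 where "R2 = G (a + xi *\<^sub>R w) - G a - H *v (xi *\<^sub>R w)"
    have nR1: "norm R1 \<le> eps * (\<bar>s\<bar> * (Cv + Cw))"
    proof -
      have nl: "norm (s *\<^sub>R v + xi *\<^sub>R w) < d" using small(1)[OF xi] unfolding d2_def by simp
      have "norm R1 \<le> eps * norm (s *\<^sub>R v + xi *\<^sub>R w)"
        unfolding R1_def using dd[of "a + s *\<^sub>R v + xi *\<^sub>R w"] nl by (simp add: add.assoc)
      also have "norm (s *\<^sub>R v + xi *\<^sub>R w) \<le> \<bar>s\<bar> * (Cv + Cw)"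
      proof -
        have "norm (s *\<^sub>R v + xi *\<^sub>R w) \<le> \<bar>s\<bar> * Cv + \<bar>xi\<bar> * Cw"
          unfolding Cv_def Cw_def using norm_triangle_ineq[of "s *\<^sub>R v" "xi *\<^sub>R w"] by simp
        also have "\<dots> \<le> \<bar>s\<bar> * Cv + \<bar>s\<bar> * Cw" using xi CvCw by (simp add: mult_right_mono)
        finally show ?thesis by (simp add: algebra_simps)
      qed
      then have "eps * norm (s *\<^sub>R v + xi *\<^sub>R w) \<le> eps * (\<bar>s\<bar> * (Cv + Cw))"
        using eps by (simp add: mult_left_mono)
      finally show ?thesis .
    qed
    have nR2: "norm R2 \<le> eps * (\<bar>s\<bar> * Cw)"
    proof -
      have nl: "norm (xi *\<^sub>R w) < d" using small(2)[OF xi] unfolding d2_def by simp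
      have "norm R2 \<le> eps * norm (xi *\<^sub>R w)"
        unfolding R2_def using dd[of "a + xi *\<^sub>R w"] nl by simp
      also have "norm (xi *\<^sub>R w) \<le> \<bar>s\<bar> * Cw" unfolding Cw_def using xi by (simp add: mult_right_mono)
      then have "eps * norm (xi *\<^sub>R w) \<le> eps * (\<bar>s\<bar> * Cw)" using eps by (simp add: mult_left_mono)
      finally show ?thesis .
    qed
    have phi'eq: "phi' xi = s * (w \<bullet> (H *v v)) + (R1 - R2) \<bullet> w"
    proof -
      have "H *v (s *\<^sub>R v + xi *\<^sub>R w) - H *v (xi *\<^sub>R w) = s *\<^sub>R (H *v v)"
        by (simp add: matrix_vector_right_distrib matrix_vector_mult_scaleR)
      then have "G (a + s *\<^sub>R v + xi *\<^sub>R w) - G (a + xi *\<^sub>R w) = s *\<^sub>R (H *v v) + (R1 - R2)"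
        unfolding R1_def R2_def by (simp add: algebra_simps)
      then have "(G (a + s *\<^sub>R v + xi *\<^sub>R w) - G (a + xi *\<^sub>R w)) \<bullet> w = (s *\<^sub>R (H *v v) + (R1 - R2)) \<bullet> w"
        by simp
      then have "phi' xi = s * ((H *v v) \<bullet> w) + (R1 - R2) \<bullet> w"
        unfolding phi'_def by (simp add: inner_diff_left inner_add_left)
      then show ?thesis by (simp add: inner_commute[of "H *v v" w])
    qed
    have Delta: "U (a + s *\<^sub>R v + s *\<^sub>R w) - U (a + s *\<^sub>R v) - U (a + s *\<^sub>R w) + U a = phi s - phi 0"
      unfolding phi_def by simp
    have "(U (a + s *\<^sub>R v + s *\<^sub>R w) - U (a + s *\<^sub>R v) - U (a + s *\<^sub>R w) + U a) / s^2 - w \<bullet> (H *v v)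
        = ((R1 - R2) \<bullet> w) / s"
      unfolding Delta mv phi'eq using s0 by (simp add: power2_eq_square field_simps)
    also have "norm \<dots> \<le> (norm R1 + norm R2) * Cw / \<bar>s\<bar>"
    proof -
      have "\<bar>(R1 - R2) \<bullet> w\<bar> \<le> norm (R1 - R2) * Cw" unfolding Cw_def by (rule Cauchy_Schwarz_ineq2)
      also have "\<dots> \<le> (norm R1 + norm R2) * Cw" using CvCw by (simp add: mult_right_mono norm_triangle_ineq4)
      finally show ?thesis by (simp add: divide_right_mono)
    qed
    also have "\<dots> \<le> (eps * (\<bar>s\<bar> * (Cv + Cw)) + eps * (\<bar>s\<bar> * Cw)) * Cw / \<bar>s\<bar>"
      using nR1 nR2 CvCw s0 by (intro divide_right_mono mult_right_mono add_mono) auto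
    also have "\<dots> = eps * ((Cv + 2 * Cw) * Cw)" using s0 by (simp add: field_simps)
    also have "\<dots> < r"
    proof -
      have "(Cv + 2 * Cw) * Cw < K" unfolding K_def by simp
      then have "eps * ((Cv + 2 * Cw) * Cw) < eps * K" using eps by simp
      also have "eps * K = r / 2" unfolding eps_def using Kpos by simp
      finally show ?thesis using r by simp
    qed
    finally show "norm ((U (a + s *\<^sub>R v + s *\<^sub>R w) - U (a + s *\<^sub>R v) - U (a + s *\<^sub>R w) + U a) / s^2 - w \<bullet> (H *v v)) < r" .
  qed
qed

lemma hess_symmetric:
  fixes U :: "real^'m \<Rightarrow> real" and G :: "real^'m \<Rightarrow> real^'m" and H :: "real^'m^'m"
  assumes S: "open S" "a \<in> S"
    and dU: "\<And>y. y \<in> S \<Longrightarrow> (U has_derivative (\<lambda>h. G y \<bullet> h)) (at y)"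
    and dG: "(G has_derivative (\<lambda>h. H *v h)) (at a)"
  shows "v \<bullet> (H *v w) = w \<bullet> (H *v v)"
proof -
  have l1: "((\<lambda>s. (U (a + s *\<^sub>R v + s *\<^sub>R w) - U (a + s *\<^sub>R v) - U (a + s *\<^sub>R w) + U a) / s^2)
           \<longlongrightarrow> w \<bullet> (H *v v)) (at 0)" by (rule schwarz_limit[OF S dU dG])
  have l2: "((\<lambda>s. (U (a + s *\<^sub>R w + s *\<^sub>R v) - U (a + s *\<^sub>R w) - U (a + s *\<^sub>R v) + U a) / s^2)
           \<longlongrightarrow> v \<bullet> (H *v w)) (at 0)" by (rule schwarz_limit[OF S dU dG])
  have eq: "(\<lambda>s. (U (a + s *\<^sub>R w + s *\<^sub>R v) - U (a + s *\<^sub>R w) - U (a + s *\<^sub>R v) + U a) / s^2)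
      = (\<lambda>s::real. (U (a + s *\<^sub>R v + s *\<^sub>R w) - U (a + s *\<^sub>R v) - U (a + s *\<^sub>R w) + U a) / s^2)"
    by (rule ext) (simp add: add.commute add.left_commute)
  have "v \<bullet> (H *v w) = w \<bullet> (H *v v)"
    by (rule tendsto_unique[OF _ l2[unfolded eq] l1]) simp
  then show ?thesis .
qed

lemma C2_grad:
  fixes u :: "real^'m \<Rightarrow> real"
  assumes "C2_sphere u" "y \<noteq> 0"
  shows "(sph_ext u has_derivative (\<lambda>h. ext_grad u y \<bullet> h)) (at y)"
  using assms unfolding C2_sphere_def by (intro grad_has_derivative) auto

lemma C2_hess:
  fixes u :: "real^'m \<Rightarrow> real"
  assumes "C2_sphere u" "y \<noteq> 0"
  shows "(ext_grad u has_derivative (\<lambda>h. ext_hess u y *v h)) (at y)"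
  using assms unfolding C2_sphere_def by (intro hess_has_derivative) auto

lemma C2_sym:
  fixes u :: "real^'m \<Rightarrow> real"
  assumes "C2_sphere u" "x \<noteq> 0"
  shows "v \<bullet> (ext_hess u x *v w) = w \<bullet> (ext_hess u x *v v)"
proof (rule hess_symmetric[of "- {0}" x "sph_ext u" "ext_grad u"])
  show "open (- {0 :: real^'m})" by auto
  show "x \<in> - {0}" using assms by simp
  show "\<And>y. y \<in> - {0} \<Longrightarrow> (sph_ext u has_derivative (\<lambda>h. ext_grad u y \<bullet> h)) (at y)"
    using C2_grad[OF assms(1)] by simp
  show "(ext_grad u has_derivative (*v) (ext_hess u x)) (at x)"
    using C2_hess[OF assms] by simp
qed

lemma sph_A_qf: "sph_A u x v w = qf (ext_hess u x) (u x - ext_grad u x \<bullet> x) v w"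
  unfolding sph_A_def sph_hess_def qf_def by (simp add: algebra_simps)

lemma sph_eigs_frame:
  fixes u :: "real^'m \<Rightarrow> real"
  assumes "C2_sphere u" "x \<in> sphere 0 1"
  shows "\<exists>e. tangent_frame x e \<and> (\<forall>i\<in>{1..CARD('m) - 1}. \<forall>j\<in>{1..CARD('m) - 1}.
          sph_A u x (e i) (e j) = (if i = j then sph_eigs u x i else 0))"
proof -
  have xx: "x \<bullet> x = 1" using assms(2) by (simp add: norm_eq_1)
  have x0: "x \<noteq> 0" using assms(2) by auto
  have "\<exists>lam e. tangent_frame x e \<and>
     (\<forall>i\<in>{1..CARD('m) - 1}. \<forall>j\<in>{1..CARD('m) - 1}.
       qf (ext_hess u x) (u x - ext_grad u x \<bullet> x) (e i) (e j) = (if i = j then lam i else 0))"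
    by (rule frame_exists[OF xx C2_sym[OF assms(1) x0]])
  then have "\<exists>lam. \<exists>e. tangent_frame x e \<and>
      (\<forall>i\<in>{1..CARD('m) - 1}. \<forall>j\<in>{1..CARD('m) - 1}.
          sph_A u x (e i) (e j) = (if i = j then lam i else 0))"
    unfolding sph_A_qf .
  then show ?thesis unfolding sph_eigs_def by (rule someI_ex)
qed

lemma sph_ext_on_sphere: "x \<in> sphere 0 1 \<Longrightarrow> sph_ext u x = u x"
  unfolding sph_ext_def by simp

lemma sph_ext_homog: "r > 0 \<Longrightarrow> sph_ext u (r *\<^sub>R y) = sph_ext u y"
  unfolding sph_ext_def by (simp add: field_simps)

lemma sph_ext_proj: "y \<noteq> 0 \<Longrightarrow> sph_ext u y = u ((1 / norm y) *\<^sub>R y) \<and> (1 / norm y) *\<^sub>R y \<in> sphere 0 1"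
  unfolding sph_ext_def by (simp add: divide_inverse_commute)

lemma C2_cont:
  fixes u :: "real^'m \<Rightarrow> real"
  assumes "C2_sphere u"
  shows "continuous_on (sphere 0 1) u"
proof -
  have "continuous_on (sphere 0 1) (sph_ext u)"
  proof (rule continuous_at_imp_continuous_on, rule ballI)
    fix y :: "real^'m" assume "y \<in> sphere 0 1"
    then have "y \<noteq> 0" by auto
    then have "sph_ext u differentiable (at y)" using assms unfolding C2_sphere_def by auto
    then show "isCont (sph_ext u) y" by (rule differentiable_imp_continuous_within)
  qed
  then show ?thesis by (rule continuous_on_eq) (simp add: sph_ext_on_sphere)
qed

lemma second_order_1d:
  fixes g g' :: "real \<Rightarrow> real"
  assumes d: "d > 0" and gmax: "\<And>s. \<bar>s\<bar> < d \<Longrightarrow> g s \<le> g 0"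
    and dg: "\<And>s. \<bar>s\<bar> < d \<Longrightarrow> (g has_real_derivative g' s) (at s)"
    and g'0: "g' 0 = 0" and dg': "(g' has_real_derivative c) (at 0)"
  shows "c \<le> 0"
proof (rule ccontr)
  assume "\<not> c \<le> 0"
  then have c: "c > 0" by simp
  obtain d' where d': "d' > 0" "\<And>h. h > 0 \<Longrightarrow> h < d' \<Longrightarrow> g' 0 < g' (0 + h)"
    using DERIV_pos_inc_right[OF dg' c] by blast
  define h where "h = min d d' / 2"
  have h: "h > 0" "h < d" "h < d'" unfolding h_def using d d' by auto
  have "\<exists>z. 0 < z \<and> z < h \<and> g h - g 0 = (h - 0) * g' z"
    by (rule MVT2[OF h(1)]) (rule dg, use h in auto)
  then obtain z where z: "0 < z" "z < h" "g h - g 0 = h * g' z" by auto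
  have "g' z > 0" using d'(2)[of z] z h g'0 by simp
  then have "g h - g 0 > 0" using z(3) h(1) by simp
  moreover have "g h \<le> g 0" using gmax[of h] h by simp
  ultimately show False by simp
qed

lemma max_principle:
  fixes u v :: "real^'m \<Rightarrow> real"
  assumes Cu: "C2_sphere u" and Cv: "C2_sphere v" and x0: "x0 \<in> sphere 0 1" and t: "t > 0"
    and Wle: "\<And>y. y \<noteq> 0 \<Longrightarrow> sph_ext u y - t * sph_ext v y \<le> 0"
    and W0: "u x0 - t * v x0 = 0"
  shows "ext_grad u x0 = t *\<^sub>R ext_grad v x0"
    and "\<And>e. sph_A u x0 e e \<le> t * sph_A v x0 e e"
proof -
  define W where "W = (\<lambda>y. sph_ext u y - t * sph_ext v y)"
  define G where "G = (\<lambda>y. ext_grad u y - t *\<^sub>R ext_grad v y)"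
  have dW: "(W has_derivative (\<lambda>h. G y \<bullet> h)) (at y)" if "y \<noteq> 0" for y
  proof -
    have "(W has_derivative (\<lambda>h. ext_grad u y \<bullet> h - t * (ext_grad v y \<bullet> h))) (at y)"
      unfolding W_def using C2_grad[OF Cu that] C2_grad[OF Cv that]
      by (auto intro!: derivative_eq_intros)
    moreover have "(\<lambda>h. ext_grad u y \<bullet> h - t * (ext_grad v y \<bullet> h)) = (\<lambda>h. G y \<bullet> h)"
      unfolding G_def by (rule ext) (simp add: inner_diff_left)
    ultimately show ?thesis by simp
  qed
  have x0n: "x0 \<noteq> 0" using x0 by auto
  have Wx0: "W x0 = 0" unfolding W_def using W0 x0 by (simp add: sph_ext_on_sphere)
  have "(\<lambda>h. G x0 \<bullet> h) = (\<lambda>h. 0)"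
  proof (rule differential_zero_maxmin[of x0 "- {0}"])
    show "x0 \<in> - {0}" using x0n by simp
    show "open (- {0::real^'m})" by auto
    show "(W has_derivative (\<lambda>h. G x0 \<bullet> h)) (at x0)" by (rule dW[OF x0n])
    show "(\<forall>y\<in>- {0}. W y \<le> W x0) \<or> (\<forall>y\<in>- {0}. W x0 \<le> W y)"
      using Wle Wx0 unfolding W_def by auto
  qed
  then have "G x0 \<bullet> G x0 = 0" by (rule fun_cong)
  then have G0: "G x0 = 0" by simp
  then show grad: "ext_grad u x0 = t *\<^sub>R ext_grad v x0" unfolding G_def by simp
  fix e :: "real^'m"
  define dl where "dl = 1 / (norm e + 1)"
  have dl: "dl > 0" unfolding dl_def by (simp add: add_nonneg_pos)
  have nz: "x0 + s *\<^sub>R e \<noteq> 0" if "\<bar>s\<bar> < dl" for s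
  proof
    assume z: "x0 + s *\<^sub>R e = 0"
    have "norm (s *\<^sub>R e) = \<bar>s\<bar> * norm e" by simp
    also have "\<dots> \<le> dl * norm e" using that by (simp add: mult_right_mono)
    also have "\<dots> < 1"
    proof -
      have p: "norm e + 1 > 0" by (simp add: add_nonneg_pos)
      have "dl * norm e = norm e / (norm e + 1)" unfolding dl_def by simp
      also have "\<dots> < 1" using p by (simp add: divide_less_eq)
      finally show ?thesis .
    qed
    finally have "norm (s *\<^sub>R e) < 1" .
    moreover have "s *\<^sub>R e = - x0" using z by (simp add: eq_neg_iff_add_eq_0 add.commute)
    ultimately show False using x0 by simp
  qed
  define g where "g = (\<lambda>s. W (x0 + s *\<^sub>R e))"
  define g' where "g' = (\<lambda>s. G (x0 + s *\<^sub>R e) \<bullet> e)"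
  define HU where "HU = ext_hess u x0"
  define HV where "HV = ext_hess v x0"
  define c where "c = (HU *v e - t *\<^sub>R (HV *v e)) \<bullet> e"
  have gmax: "g s \<le> g 0" if "\<bar>s\<bar> < dl" for s
    unfolding g_def using Wle[OF nz[OF that]] Wx0 unfolding W_def by simp
  have dg: "(g has_real_derivative g' s) (at s)" if "\<bar>s\<bar> < dl" for s
    unfolding g_def g'_def by (rule deriv_line) (use dW[OF nz[OF that]] in simp)
  have g'0: "g' 0 = 0" unfolding g'_def using G0 by simp
  have dG: "(G has_derivative (\<lambda>h. HU *v h - t *\<^sub>R (HV *v h))) (at x0)"
    unfolding G_def HU_def HV_def using C2_hess[OF Cu x0n] C2_hess[OF Cv x0n]
    by (auto intro!: derivative_eq_intros)
  have dl1: "((\<lambda>s. x0 + s *\<^sub>R e) has_derivative (\<lambda>s. s *\<^sub>R e)) (at 0)"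
    by (auto intro!: derivative_eq_intros)
  have "((G \<circ> (\<lambda>s. x0 + s *\<^sub>R e)) has_derivative ((\<lambda>h. HU *v h - t *\<^sub>R (HV *v h)) \<circ> (\<lambda>s. s *\<^sub>R e))) (at 0)"
    by (rule diff_chain_at[OF dl1]) (use dG in simp)
  then have "((\<lambda>s. G (x0 + s *\<^sub>R e) \<bullet> e) has_derivative (\<lambda>s. ((HU *v (s *\<^sub>R e) - t *\<^sub>R (HV *v (s *\<^sub>R e)))) \<bullet> e)) (at 0)"
    by (auto intro!: derivative_eq_intros simp: comp_def)
  moreover have "(\<lambda>s. ((HU *v (s *\<^sub>R e) - t *\<^sub>R (HV *v (s *\<^sub>R e)))) \<bullet> e) = (*) c"
    unfolding c_def by (rule ext) (simp add: matrix_vector_mult_scaleR algebra_simps inner_diff_left)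
  ultimately have dg': "(g' has_real_derivative c) (at 0)"
    unfolding g'_def has_field_derivative_def by simp
  have cle: "c \<le> 0" by (rule second_order_1d[OF dl gmax dg g'0 dg'])
  have c_alt: "c = e \<bullet> (HU *v e) - t * (e \<bullet> (HV *v e))"
    unfolding c_def by (simp add: inner_diff_left inner_commute[of "HU *v e" e] inner_commute[of "HV *v e" e])
  have Gx: "G x0 \<bullet> x0 = ext_grad u x0 \<bullet> x0 - t * (ext_grad v x0 \<bullet> x0)"
    unfolding G_def by (simp add: inner_diff_left)
  have "sph_A u x0 e e - t * sph_A v x0 e e = c - (G x0 \<bullet> x0) * (e \<bullet> e) + (u x0 - t * v x0) * (e \<bullet> e)"
    unfolding sph_A_def sph_hess_def c_alt Gx HU_def HV_def
    by (simp add: algebra_simps)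
  also have "\<dots> = c" using G0 W0 by simp
  finally show "sph_A u x0 e e \<le> t * sph_A v x0 e e" using cle by simp
qed

lemma qf_scale_mat: "qf (t *\<^sub>R H) (t * c) v w = t * qf (H::real^'m^'m) c v w"
  unfolding qf_def by (simp add: scaleR_matrix_vector_assoc[symmetric] algebra_simps)

lemma rhs_scale:
  fixes t a g e p phi :: real
  assumes t: "t > 0" and a: "a > 0" and g: "g \<ge> 0"
  shows "(t * a) powr (p - 1) * ((t * a)^2 + (t * g)^2) powr e * phi
       = t powr (p - 1 + 2 * e) * (a powr (p - 1) * (a^2 + g^2) powr e * phi)"
proof -
  have X: "(t * a)^2 + (t * g)^2 = t^2 * (a^2 + g^2)" by (simp add: power2_eq_square algebra_simps)
  have Xp: "a^2 + g^2 \<ge> 0" by simp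
  have t2: "t^2 = t powr 2" using powr_realpow[OF t, of 2] by simp
  have "(t^2 * (a^2 + g^2)) powr e = (t^2) powr e * (a^2 + g^2) powr e"
    by (rule powr_mult)
  also have "(t^2) powr e = t powr (2 * e)" unfolding t2 powr_powr ..
  finally have e1: "((t * a)^2 + (t * g)^2) powr e = t powr (2 * e) * (a^2 + g^2) powr e" unfolding X .
  have e2: "(t * a) powr (p - 1) = t powr (p - 1) * a powr (p - 1)"
    by (rule powr_mult)
  have "(t * a) powr (p - 1) * ((t * a)^2 + (t * g)^2) powr e * phi
      = (t powr (p - 1) * t powr (2 * e)) * (a powr (p - 1) * (a^2 + g^2) powr e * phi)"
    unfolding e1 e2 by (simp add: algebra_simps)
  also have "t powr (p - 1) * t powr (2 * e) = t powr (p - 1 + 2 * e)" by (simp add: powr_add)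
  finally show ?thesis .
qed

lemma half_uniq:
  fixes P k l :: nat and p q :: real and phi :: "real^'m::finite \<Rightarrow> real"
    and u v :: "real^'m \<Rightarrow> real"
  assumes lk: "l < k" and pq: "p > q - real l"
    and phipos: "\<forall>x\<in>sphere 0 1. phi x > 0"
    and upos: "\<forall>x\<in>sphere 0 1. u x > 0" and uadm: "admissible P k u" and usol: "solves_eq P k l p q phi u"
    and vpos: "\<forall>x\<in>sphere 0 1. v x > 0" and vadm: "admissible P k v" and vsol: "solves_eq P k l p q phi v"
  shows "\<forall>x\<in>sphere 0 1. u x \<le> v x"
proof -
  define n where "n = CARD('m) - 1"
  define M where "M = multi_indices n P"
  have Cu: "C2_sphere u" and Cv: "C2_sphere v" using uadm vadm unfolding admissible_def by auto
  have cont: "continuous_on (sphere 0 1) (\<lambda>x. u x / v x)"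
    using C2_cont[OF Cu] C2_cont[OF Cv] vpos by (intro continuous_intros) auto
  have ne: "sphere (0::real^'m) 1 \<noteq> {}"
  proof -
    have "axis undefined (1::real) \<in> sphere (0::real^'m) 1" by simp
    then show ?thesis by blast
  qed
  obtain x0 where x0: "x0 \<in> sphere 0 1" and x0max: "\<And>x. x \<in> sphere 0 1 \<Longrightarrow> u x / v x \<le> u x0 / v x0"
    using continuous_attains_sup[OF compact_sphere ne cont] by blast
  define t where "t = u x0 / v x0"
  have ux0: "u x0 > 0" and vx0: "v x0 > 0" using upos vpos x0 by auto
  have tpos: "t > 0" unfolding t_def using ux0 vx0 by simp
  show ?thesis
  proof (cases "t \<le> 1")
    case True
    show ?thesis
    proof
      fix x :: "real^'m" assume x: "x \<in> sphere 0 1"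
      have "u x / v x \<le> 1" using x0max[OF x] True unfolding t_def by simp
      then show "u x \<le> v x" using vpos x by (simp add: divide_le_eq)
    qed
  next
    case False
    then have t1: "t > 1" by simp
    have Wle: "sph_ext u y - t * sph_ext v y \<le> 0" if "y \<noteq> 0" for y
    proof -
      define y' where "y' = (1 / norm y) *\<^sub>R y"
      have y': "sph_ext u y = u y'" "sph_ext v y = v y'" "y' \<in> sphere 0 1"
        using sph_ext_proj[OF that, of u] sph_ext_proj[OF that, of v] unfolding y'_def by auto
      have "u y' / v y' \<le> t" using x0max[OF y'(3)] unfolding t_def .
      then have "u y' \<le> t * v y'" using vpos y'(3) by (simp add: divide_le_eq)
      then show ?thesis using y' by simp
    qed
    have W0: "u x0 - t * v x0 = 0" unfolding t_def using vx0 by simp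
    have grad: "ext_grad u x0 = t *\<^sub>R ext_grad v x0"
      and hess: "\<And>e. sph_A u x0 e e \<le> t * sph_A v x0 e e"
      using max_principle[OF Cu Cv x0 tpos Wle W0] by auto
    define lam where "lam = sph_eigs u x0"
    define mu where "mu = sph_eigs v x0"
    obtain e where te: "tangent_frame x0 e"
      and de: "\<forall>i\<in>{1..CARD('m) - 1}. \<forall>j\<in>{1..CARD('m) - 1}. sph_A u x0 (e i) (e j) = (if i = j then lam i else 0)"
      using sph_eigs_frame[OF Cu x0] unfolding lam_def by blast
    obtain f where tf: "tangent_frame x0 f"
      and df: "\<forall>i\<in>{1..CARD('m) - 1}. \<forall>j\<in>{1..CARD('m) - 1}. sph_A v x0 (f i) (f j) = (if i = j then mu i else 0)"
      using sph_eigs_frame[OF Cv x0] unfolding mu_def by blast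
    define HU where "HU = ext_hess u x0"
    define cU where "cU = u x0 - ext_grad u x0 \<bullet> x0"
    define HV where "HV = t *\<^sub>R ext_hess v x0"
    define cV where "cV = t * (v x0 - ext_grad v x0 \<bullet> x0)"
    have qA: "sph_A u x0 a b = qf HU cU a b" for a b unfolding HU_def cU_def by (rule sph_A_qf)
    have qB: "t * sph_A v x0 a b = qf HV cV a b" for a b
      unfolding HV_def cV_def sph_A_qf qf_scale_mat ..
    have dA: "\<forall>i\<in>{1..CARD('m) - 1}. \<forall>j\<in>{1..CARD('m) - 1}. qf HU cU (e i) (e j) = (if i = j then lam i else 0)"
      using de unfolding qA .
    have dB: "\<forall>i\<in>{1..CARD('m) - 1}. \<forall>j\<in>{1..CARD('m) - 1}. qf HV cV (f i) (f j) = (if i = j then t * mu i else 0)"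
      using df unfolding qB[symmetric] by auto
    have xx: "x0 \<bullet> x0 = 1" using x0 by (simp add: norm_eq_1)
    have le: "qf HU cU w w \<le> qf HV cV w w" if "w \<bullet> x0 = 0" for w
      unfolding qA[symmetric] qB[symmetric] by (rule hess)
    have cnt: "card {i\<in>{1..n}. lam i \<ge> c} \<le> card {j\<in>{1..n}. t * mu j \<ge> c}" for c
      unfolding n_def by (rule eig_count[OF xx te tf dA dB le])
    have Gu: "in_Gamma k (Lam lam) M" using uadm x0 unfolding admissible_def lam_def M_def n_def by auto
    have Gv: "in_Gamma k (Lam mu) M" using vadm x0 unfolding admissible_def mu_def M_def n_def by auto
    have sc: "esym k (Lam lam) M * esym l (Lam (\<lambda>i. t * mu i)) M
        \<le> esym k (Lam (\<lambda>i. t * mu i)) M * esym l (Lam lam) M"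
      using spectral_compare[OF cnt Gu[unfolded M_def] lk] unfolding M_def by simp
    have finM: "finite M" unfolding M_def by (rule finite_multi_indices)
    define ak where "ak = esym k (Lam lam) M"
    define al where "al = esym l (Lam lam) M"
    define bk where "bk = esym k (Lam mu) M"
    define bl where "bl = esym l (Lam mu) M"
    have sc': "ak * (t^l * bl) \<le> (t^k * bk) * al"
      using sc unfolding Lam_scale esym_scale ak_def al_def bk_def bl_def .
    have alpos: "al > 0" unfolding al_def by (rule esym_pos_le[OF finM Gu]) (use lk in simp)
    have blpos: "bl > 0" unfolding bl_def by (rule esym_pos_le[OF finM Gv]) (use lk in simp)
    define Ru where "Ru = u x0 powr (p - 1) * ((u x0)\<^sup>2 + (norm (sph_grad u x0))\<^sup>2) powr ((real k + 1 - q) / 2) * phi x0"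
    define Rv where "Rv = v x0 powr (p - 1) * ((v x0)\<^sup>2 + (norm (sph_grad v x0))\<^sup>2) powr ((real k + 1 - q) / 2) * phi x0"
    have su: "ak / al = Ru" using usol x0 unfolding solves_eq_def ak_def al_def Ru_def M_def n_def lam_def by auto
    have sv: "bk / bl = Rv" using vsol x0 unfolding solves_eq_def bk_def bl_def Rv_def M_def n_def mu_def by auto
    have ak: "ak = Ru * al" using su alpos by (simp add: field_simps)
    have bk: "bk = Rv * bl" using sv blpos by (simp add: field_simps)
    have ux: "u x0 = t * v x0" using W0 by simp
    have gu: "norm (sph_grad u x0) = t * norm (sph_grad v x0)"
      unfolding sph_grad_def grad using tpos by simp
    have Ru_eq: "Ru = t powr (p - 1 + 2 * ((real k + 1 - q) / 2)) * Rv"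
      unfolding Ru_def Rv_def ux gu by (rule rhs_scale[OF tpos vx0]) simp
    have Rvpos: "Rv > 0" unfolding Rv_def using vx0 phipos x0 by simp
    have "(Ru * t^l) * (al * bl) \<le> (t^k * Rv) * (al * bl)"
      using sc' unfolding ak bk by (simp add: algebra_simps)
    then have "Ru * t^l \<le> t^k * Rv" using alpos blpos by simp
    then have "t powr (p - 1 + 2 * ((real k + 1 - q) / 2)) * t^l * Rv \<le> t^k * Rv"
      unfolding Ru_eq by (simp add: algebra_simps)
    then have "t powr (p - 1 + 2 * ((real k + 1 - q) / 2)) * t^l \<le> t^k" using Rvpos by simp
    moreover have "t^l = t powr (real l)" "t^k = t powr (real k)" using powr_realpow[OF tpos] by auto
    ultimately have "t powr (p - 1 + 2 * ((real k + 1 - q) / 2) + real l) \<le> t powr (real k)"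
      by (simp add: powr_add)
    then have "p - 1 + 2 * ((real k + 1 - q) / 2) + real l \<le> real k" using t1 by simp
    moreover have "2 * ((real k + 1 - q) / 2) = real k + 1 - q" by simp
    ultimately have "p \<le> q - real l" by linarith
    then show ?thesis using pq by simp
  qed
qed

theorem lemma4p5:
  fixes P k l :: nat and p q :: real and phi :: "real^'m::finite \<Rightarrow> real"
    and u v :: "real^'m \<Rightarrow> real"
  assumes "CARD('m) - 1 \<ge> 2"
    and "1 < P" and "P \<le> (CARD('m) - 1) - 1"
    and "l < k" and "k \<le> (CARD('m) - 1) choose P"
    and "p > q - real l"
    and "continuous_on (sphere 0 1) phi" and "\<forall>x\<in>sphere 0 1. phi x > 0"
    and "\<forall>x\<in>sphere 0 1. u x > 0" and "admissible P k u" and "solves_eq P k l p q phi u"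
    and "\<forall>x\<in>sphere 0 1. v x > 0" and "admissible P k v" and "solves_eq P k l p q phi v"
  shows "\<forall>x\<in>sphere 0 1. u x = v x"
proof -
  have "\<forall>x\<in>sphere 0 1. u x \<le> v x"
    by (rule half_uniq[OF assms(4,6,8,9,10,11,12,13,14)])
  moreover have "\<forall>x\<in>sphere 0 1. v x \<le> u x"
    by (rule half_uniq[OF assms(4,6,8,12,13,14,9,10,11)])
  ultimately show ?thesis by force
qed

end
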